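(* Let $n\ge2$ and let $\mathbb{K}$ be a field with $\operatorname{char}\mathbb{K}$ either $0$ or coprime to both $n$ and $n-1$. Then the algebra $A_n=\mathbb{K}[x,y]/(y^{2n+3},\, x^ny^2-y^{n+2},\, x^{2n+1}-xy^{n+1})$ fails property (AH), i.e. the natural action of $\operatorname{Aut}(\mathfrak{m}_n)$ on the set of complementary hyperplanes of $\mathfrak{m}_n$ is not transitive.
   Context: $A_n$ is a finite-dimensional Gorenstein local algebra with maximal ideal $\mathfrak{m}_n=(x,y)$. For a finite-dimensional local algebra $A$ with maximal ideal $\mathfrak{m}$, $\operatorname{Soc}A=\{s\in A\mid s\mathfrak{m}=0\}$; $A$ is Gorenstein if $\dim \operatorname{Soc}A=1$; a complementary hyperplane is a subspace $U\subseteq\mathfrak{m}$ with $\mathfrak{m}=U\oplus\operatorname{Soc}A$. $\operatorname{Aut}(\mathfrak{m})$ is the group of automorphisms of $\mathfrak{m}$ as a (non-unital) $\mathbb{K}$-algebra. A Gorenstein algebra $A$ has property (AH) (affine homogeneity property) if $\operatorname{Aut}(\mathfrak{m})$ acts transitively on the set of complementary hyperplanes in $\mathfrak{m}$. *)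

theory Defs
  imports "HOL-Computational_Algebra.Polynomial"
begin

text \<open>K[x,y] is modelled as 'a poly poly: outer variable x, inner variable y.\<close>
type_synonym 'a bipoly = "'a poly poly"

definition varX :: "'a::field bipoly" where "varX = monom 1 1"
definition varY :: "'a::field bipoly" where "varY = [:[:0, 1:]:]"

definition const_term :: "'a::field bipoly \<Rightarrow> 'a" where
  "const_term p = coeff (coeff p 0) 0"

definition ideal3 :: "'a::field bipoly \<Rightarrow> 'a bipoly \<Rightarrow> 'a bipoly \<Rightarrow> 'a bipoly set" where
  "ideal3 g1 g2 g3 = {a * g1 + b * g2 + c * g3 | a b c. True}"

definition cls :: "'a::field bipoly set \<Rightarrow> 'a bipoly \<Rightarrow> 'a bipoly set" where
  "cls I p = {q. q - p \<in> I}"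

definition qcarrier :: "'a::field bipoly set \<Rightarrow> 'a bipoly set set" where
  "qcarrier I = range (cls I)"

definition qzero :: "'a::field bipoly set \<Rightarrow> 'a bipoly set" where
  "qzero I = cls I 0"

definition qadd :: "'a::field bipoly set \<Rightarrow> 'a bipoly set \<Rightarrow> 'a bipoly set \<Rightarrow> 'a bipoly set" where
  "qadd I A B = {q. \<exists>a\<in>A. \<exists>b\<in>B. q - (a + b) \<in> I}"

definition qmul :: "'a::field bipoly set \<Rightarrow> 'a bipoly set \<Rightarrow> 'a bipoly set \<Rightarrow> 'a bipoly set" where
  "qmul I A B = {q. \<exists>a\<in>A. \<exists>b\<in>B. q - a * b \<in> I}"

definition qsmul :: "'a::field bipoly set \<Rightarrow> 'a \<Rightarrow> 'a bipoly set \<Rightarrow> 'a bipoly set" where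
  "qsmul I c A = {q. \<exists>a\<in>A. q - smult [:c:] a \<in> I}"

definition qmax :: "'a::field bipoly set \<Rightarrow> 'a bipoly set set" where
  "qmax I = {cls I p | p. const_term p = 0}"

definition socle :: "'a::field bipoly set \<Rightarrow> 'a bipoly set set" where
  "socle I = {s \<in> qcarrier I. \<forall>t\<in>qmax I. qmul I s t = qzero I}"

definition qsubspace :: "'a::field bipoly set \<Rightarrow> 'a bipoly set set \<Rightarrow> bool" where
  "qsubspace I U \<longleftrightarrow> U \<subseteq> qcarrier I \<and> qzero I \<in> U \<and>
     (\<forall>u\<in>U. \<forall>v\<in>U. qadd I u v \<in> U) \<and> (\<forall>c. \<forall>u\<in>U. qsmul I c u \<in> U)"

definition compl_hyperplane :: "'a::field bipoly set \<Rightarrow> 'a bipoly set set \<Rightarrow> bool" where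
  "compl_hyperplane I U \<longleftrightarrow> qsubspace I U \<and> U \<subseteq> qmax I \<and>
     {qadd I u s | u s. u \<in> U \<and> s \<in> socle I} = qmax I \<and>
     U \<inter> socle I = {qzero I}"

definition max_aut :: "'a::field bipoly set \<Rightarrow> ('a bipoly set \<Rightarrow> 'a bipoly set) \<Rightarrow> bool" where
  "max_aut I f \<longleftrightarrow> bij_betw f (qmax I) (qmax I) \<and>
     (\<forall>a\<in>qmax I. \<forall>b\<in>qmax I. f (qadd I a b) = qadd I (f a) (f b)
                              \<and> f (qmul I a b) = qmul I (f a) (f b)) \<and>
     (\<forall>c. \<forall>a\<in>qmax I. f (qsmul I c a) = qsmul I c (f a))"

definition prop_AH :: "'a::field bipoly set \<Rightarrow> bool" where
  "prop_AH I \<longleftrightarrow> (\<forall>U V. compl_hyperplane I U \<and> compl_hyperplane I V \<longrightarrow>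
                      (\<exists>f. max_aut I f \<and> f ` U = V))"

definition An_ideal :: "nat \<Rightarrow> 'a::field bipoly set" where
  "An_ideal n = ideal3 (varY ^ (2*n+3))
                       (varX ^ n * varY ^ 2 - varY ^ (n+2))
                       (varX ^ (2*n+1) - varX * varY ^ (n+1))"

end

theory Submission
  imports Defs
begin


definition mon :: "nat \<Rightarrow> nat \<Rightarrow> 'a::field bipoly" where
  "mon i j = monom (monom 1 j) i"

definition cf :: "'a::field bipoly \<Rightarrow> nat \<Rightarrow> nat \<Rightarrow> 'a" where
  "cf p i j = coeff (coeff p i) j"

lemma cf_add[simp]: "cf (p + q) i j = cf p i j + cf q i j" by (simp add: cf_def)
lemma cf_diff[simp]: "cf (p - q) i j = cf p i j - cf q i j" by (simp add: cf_def)
lemma cf_minus[simp]: "cf (- p) i j = - cf p i j" by (simp add: cf_def)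
lemma cf_0[simp]: "cf 0 i j = 0" by (simp add: cf_def)
lemma cf_smult[simp]: "cf (smult [:c:] p) i j = c * cf p i j" by (simp add: cf_def)

lemma cf_mon: "cf (mon k l :: 'a::field bipoly) i j = (if i = k \<and> j = l then 1 else 0)"
  by (simp add: cf_def mon_def coeff_monom)

lemma cf_mon_mult: "cf (mon k l * p) i j = (if k \<le> i \<and> l \<le> j then cf p (i-k) (j-l) else 0)"
  by (auto simp add: cf_def mon_def coeff_monom_mult)

lemma cf_mult_mon: "cf (p * mon k l) i j = (if k \<le> i \<and> l \<le> j then cf p (i-k) (j-l) else 0)"
  by (metis mult.commute cf_mon_mult)

lemma varX_pow: "(varX :: 'a::field bipoly) ^ i = monom 1 i"
  by (simp add: varX_def monom_power)

lemma varY_pow: "(varY :: 'a::field bipoly) ^ j = monom (monom 1 j) 0"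
proof -
  have h: "(varY :: 'a bipoly) = monom (monom 1 1) 0"
    by (simp add: varY_def monom_0 monom_Suc)
  show ?thesis unfolding h monom_power by simp
qed

lemma mon_eq: "mon i j = (varX ^ i * varY ^ j :: 'a::field bipoly)"
  by (simp add: varX_pow varY_pow mon_def mult_monom)

lemma mon_mult: "mon i j * mon k l = (mon (i+k) (j+l) :: 'a::field bipoly)"
  by (simp add: mon_def mult_monom)

lemma mon_00: "mon 0 0 = (1 :: 'a::field bipoly)"
  by (simp add: mon_def)

lemma varX_mon: "varX = (mon 1 0 :: 'a::field bipoly)" by (simp add: mon_eq)
lemma varY_mon: "varY = (mon 0 1 :: 'a::field bipoly)" by (simp add: mon_eq)

lemma cf_mult: "cf (p * q) i j = (\<Sum>a\<le>i. \<Sum>b\<le>j. cf p a b * cf q (i-a) (j-b))"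
  by (simp add: cf_def coeff_mult coeff_sum)

definition wlow :: "nat \<Rightarrow> nat \<Rightarrow> nat \<Rightarrow> 'a::field bipoly \<Rightarrow> bool" where
  "wlow wx wy k p \<longleftrightarrow> (\<forall>i j. wx*i + wy*j < k \<longrightarrow> cf p i j = 0)"

lemma wlowD: "wlow wx wy k p \<Longrightarrow> wx*i + wy*j < k \<Longrightarrow> cf p i j = 0"
  by (simp add: wlow_def)

lemma wlow_mult:
  assumes "wlow wx wy k p" "wlow wx wy l q"
  shows "wlow wx wy (k+l) (p*q)"
  unfolding wlow_def
proof (intro allI impI)
  fix i j assume ij: "wx*i + wy*j < k + l"
  have "cf p a b * cf q (i-a) (j-b) = 0" if "a \<le> i" "b \<le> j" for a b
  proof (cases "wx*a + wy*b < k")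
    case True thus ?thesis using assms(1) by (simp add: wlow_def)
  next
    case False
    have le: "wx*a \<le> wx*i" "wy*b \<le> wy*j" using that by auto
    have e1: "wx*(i-a) = wx*i - wx*a" "wy*(j-b) = wy*j - wy*b" by (simp_all add: diff_mult_distrib2)
    have "wx*(i-a) + wy*(j-b) < l" unfolding e1 using le False ij by linarith
    thus ?thesis using assms(2) by (simp add: wlow_def)
  qed
  hence "\<And>a b. a \<in> {..i} \<Longrightarrow> b \<in> {..j} \<Longrightarrow> cf p a b * cf q (i-a) (j-b) = 0" by auto
  thus "cf (p*q) i j = 0" unfolding cf_mult by (intro sum.neutral ballI) auto
qed

lemma wlow_0[simp]: "wlow wx wy 0 p" by (simp add: wlow_def)

lemma wlow_mono: "wlow wx wy k p \<Longrightarrow> k' \<le> k \<Longrightarrow> wlow wx wy k' p"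
  by (simp add: wlow_def)

lemma wlow_power: "wlow wx wy k p \<Longrightarrow> wlow wx wy (m*k) (p^m)"
proof (induction m)
  case 0 thus ?case by simp
next
  case (Suc m)
  hence "wlow wx wy (k + m*k) (p * p^m)" by (intro wlow_mult) auto
  thus ?case by simp
qed

lemma wlow_mon: "wlow wx wy (wx*i + wy*j) (mon i j)"
  by (auto simp add: wlow_def cf_mon)

lemma wlow_add: "wlow wx wy k p \<Longrightarrow> wlow wx wy k q \<Longrightarrow> wlow wx wy k (p+q)"
  by (simp add: wlow_def)
lemma wlow_diff: "wlow wx wy k p \<Longrightarrow> wlow wx wy k q \<Longrightarrow> wlow wx wy k (p-q)"
  by (simp add: wlow_def)

definition ulow :: "nat \<Rightarrow> 'b::comm_ring_1 poly \<Rightarrow> bool" where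
  "ulow k r \<longleftrightarrow> (\<forall>i<k. coeff r i = 0)"

lemma ulow_0[simp]: "ulow 0 r" by (simp add: ulow_def)

lemma ulowD: "ulow k r \<Longrightarrow> i < k \<Longrightarrow> coeff r i = 0" by (simp add: ulow_def)

lemma sum_single:
  assumes "finite A" "k \<in> A" "\<And>i. i \<in> A \<Longrightarrow> i \<noteq> k \<Longrightarrow> g i = 0"
  shows "sum g A = g k"
  using assms by (simp add: sum.remove sum.neutral)

lemma coeff_mult_low:
  assumes "ulow k r" "ulow l s"
  shows "coeff (r*s) (k+l) = coeff r k * coeff s l"
proof -
  have "(\<Sum>i\<le>k+l. coeff r i * coeff s (k+l-i)) = coeff r k * coeff s (k+l-k)"
  proof (rule sum_single)
    fix i assume "i \<in> {..k+l}" "i \<noteq> k"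
    thus "coeff r i * coeff s (k+l-i) = 0"
      using assms by (cases "i < k") (auto simp: ulow_def)
  qed auto
  thus ?thesis by (simp add: coeff_mult)
qed

lemma coeff_mult_low1:
  assumes "ulow k r" "ulow l s"
  shows "coeff (r*s) (k+l+1) = coeff r k * coeff s (l+1) + coeff r (k+1) * coeff s l"
proof -
  have "(\<Sum>i\<le>k+l+1. coeff r i * coeff s (k+l+1-i))
        = coeff r k * coeff s (k+l+1-k) + (\<Sum>i\<in>{..k+l+1}-{k}. coeff r i * coeff s (k+l+1-i))"
    by (rule sum.remove) auto
  also have "(\<Sum>i\<in>{..k+l+1}-{k}. coeff r i * coeff s (k+l+1-i)) = coeff r (k+1) * coeff s (k+l+1-(k+1))"
  proof (rule sum_single)
    fix i assume "i \<in> {..k+l+1}-{k}" "i \<noteq> k+1"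
    thus "coeff r i * coeff s (k+l+1-i) = 0"
      using assms by (cases "i < k") (auto simp: ulow_def)
  qed auto
  finally show ?thesis by (simp add: coeff_mult)
qed

lemma ulow_mult: "ulow k r \<Longrightarrow> ulow l s \<Longrightarrow> ulow (k+l) (r*s)"
  unfolding ulow_def
proof (intro allI impI)
  fix n assume A: "\<forall>i<k. coeff r i = 0" "\<forall>i<l. coeff s i = 0" and n: "n < k + l"
  have "coeff r i * coeff s (n-i) = 0" if "i \<le> n" for i
    using A n that by (cases "i < k") auto
  thus "coeff (r*s) n = 0" by (simp add: coeff_mult)
qed

lemma ulow_mono: "ulow k r \<Longrightarrow> k' \<le> k \<Longrightarrow> ulow k' r" by (simp add: ulow_def)

lemma ulow_power: "ulow k r \<Longrightarrow> ulow (m*k) (r^m)"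
proof (induction m)
  case 0 thus ?case by simp
next
  case (Suc m) thus ?case using ulow_mult[of k r "m*k" "r^m"] by simp
qed

lemma coeff_power_low: "ulow k r \<Longrightarrow> coeff (r^m) (m*k) = coeff r k ^ m"
proof (induction m)
  case 0 thus ?case by simp
next
  case (Suc m)
  have "coeff (r * r^m) (k + m*k) = coeff r k * coeff (r^m) (m*k)"
    using Suc ulow_power by (intro coeff_mult_low) auto
  thus ?case using Suc by simp
qed

lemma coeff_power_low1: "ulow k r \<Longrightarrow> coeff (r^m) (m*k+1) = of_nat m * coeff r k ^ (m-1) * coeff r (k+1)"
proof (induction m)
  case 0 thus ?case by simp
next
  case (Suc m)
  have "coeff (r * r^m) (k + m*k + 1) = coeff r k * coeff (r^m) (m*k+1) + coeff r (k+1) * coeff (r^m) (m*k)"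
    using Suc ulow_power by (intro coeff_mult_low1) auto
  also have "\<dots> = coeff r k * (of_nat m * coeff r k ^ (m-1) * coeff r (k+1)) + coeff r (k+1) * coeff r k ^ m"
    using Suc by (simp add: coeff_power_low)
  also have "\<dots> = of_nat (Suc m) * coeff r k ^ m * coeff r (k+1)"
    by (cases m) (simp_all add: algebra_simps)
  finally show ?case by simp
qed

lemma coeff_mult_1: "coeff (r*s) 1 = coeff r 0 * coeff s 1 + coeff r 1 * coeff (s::'b::comm_ring_1 poly) 0"
  using coeff_mult_low1[of 0 r 0 s] by simp

lemma coeff_power_1: "coeff (r^m) 1 = of_nat m * coeff r 0 ^ (m-1) * coeff (r::'b::comm_ring_1 poly) 1"
  using coeff_power_low1[of 0 r m] by simp

definition Y0 :: "'a::field bipoly \<Rightarrow> 'a poly" where "Y0 p = map_poly (\<lambda>c. coeff c 0) p"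
definition Y1 :: "'a::field bipoly \<Rightarrow> 'a poly" where "Y1 p = map_poly (\<lambda>c. coeff c 1) p"

lemma coeff_Y0: "coeff (Y0 p) i = cf p i 0" by (simp add: Y0_def coeff_map_poly cf_def)
lemma coeff_Y1: "coeff (Y1 p) i = cf p i 1" by (simp add: Y1_def coeff_map_poly cf_def)

lemma Y0_mult: "Y0 (p*q) = Y0 p * Y0 q"
  by (rule poly_eqI) (simp add: coeff_Y0 cf_def coeff_mult coeff_sum coeff_mult_0)

lemma Y1_mult: "Y1 (p*q) = Y0 p * Y1 q + Y1 p * Y0 q"
  by (rule poly_eqI) (simp add: coeff_Y0 coeff_Y1 cf_def coeff_mult coeff_sum coeff_mult_1 sum.distrib)

lemma Y0_power: "Y0 (p^m) = Y0 p ^ m"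
  by (induction m) (simp_all add: Y0_mult, simp add: Y0_def)

lemma Y1_power: "Y1 (p^m) = smult (of_nat m) (Y0 p ^ (m-1) * Y1 p)"
proof (induction m)
  case 0 show ?case by (simp add: Y1_def map_poly_1)
next
  case (Suc m)
  have "Y1 (p^Suc m) = Y0 p * Y1 (p^m) + Y1 p * Y0 p ^ m"
    by (simp add: Y1_mult Y0_power)
  also have "\<dots> = smult (of_nat (Suc m)) (Y0 p ^ m * Y1 p)"
  proof (cases m)
    case 0 thus ?thesis by (simp add: Y1_def map_poly_1)
  next
    case (Suc k)
    have "Y0 p * Y1 (p^m) = smult (of_nat m) (Y0 p ^ m * Y1 p)"
      using Suc.IH Suc by (simp add: mult_smult_right mult.assoc)
    thus ?thesis by (simp add: smult_add_left algebra_simps)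
  qed
  finally show ?case by simp
qed

lemma coeff_outer_power_1: "coeff (p^m) 1 = of_nat m * coeff p 0 ^ (m-1) * coeff (p::'a::field bipoly) 1"
  by (rule coeff_power_1)


definition g1 :: "nat \<Rightarrow> 'a::field bipoly" where "g1 n = mon 0 (2*n+3)"
definition g2 :: "nat \<Rightarrow> 'a::field bipoly" where "g2 n = mon n 2 - mon 0 (n+2)"
definition g3 :: "nat \<Rightarrow> 'a::field bipoly" where "g3 n = mon (2*n+1) 0 - mon 1 (n+1)"

lemma An_ideal_eq: "An_ideal n = ideal3 (g1 n) (g2 n) (g3 n :: 'a::field bipoly)"
  by (simp add: An_ideal_def g1_def g2_def g3_def mon_eq)

lemma inI: "p \<in> An_ideal n \<longleftrightarrow> (\<exists>a b c. p = a * g1 n + b * g2 n + c * g3 n)"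
  by (simp add: An_ideal_eq ideal3_def)

lemma I_0[simp]: "0 \<in> An_ideal n"
  unfolding inI by (rule exI[of _ 0], rule exI[of _ 0], rule exI[of _ 0]) simp

lemma I_add: "p \<in> An_ideal n \<Longrightarrow> q \<in> An_ideal n \<Longrightarrow> p + q \<in> An_ideal n"
  unfolding inI by (auto, rule_tac x="a+aa" in exI, rule_tac x="b+ba" in exI, rule_tac x="c+ca" in exI, simp add: algebra_simps)

lemma I_mult: "p \<in> An_ideal n \<Longrightarrow> r * p \<in> An_ideal n"
  unfolding inI by (auto, rule_tac x="r*a" in exI, rule_tac x="r*b" in exI, rule_tac x="r*c" in exI, simp add: algebra_simps)

lemma I_mult2: "p \<in> An_ideal n \<Longrightarrow> p * r \<in> An_ideal n"
  using I_mult by (metis mult.commute)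

lemma I_uminus: "p \<in> An_ideal n \<Longrightarrow> - p \<in> An_ideal n"
  using I_mult[of p n "-1"] by simp

lemma I_diff: "p \<in> An_ideal n \<Longrightarrow> q \<in> An_ideal n \<Longrightarrow> p - q \<in> An_ideal n"
  using I_add[of p n "-q"] I_uminus[of q n] by simp

lemma I_g1: "g1 n \<in> An_ideal n"
  unfolding inI by (rule exI[of _ 1], rule exI[of _ 0], rule exI[of _ 0]) simp
lemma I_g2: "g2 n \<in> An_ideal n"
  unfolding inI by (rule exI[of _ 0], rule exI[of _ 1], rule exI[of _ 0]) simp
lemma I_g3: "g3 n \<in> An_ideal n"
  unfolding inI by (rule exI[of _ 0], rule exI[of _ 0], rule exI[of _ 1]) simp

lemma I_smult: "p \<in> An_ideal n \<Longrightarrow> smult c p \<in> An_ideal n"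
  using I_mult[of p n "[:c:]"] by simp

lemma cf00_mult: "cf (p*q) 0 0 = cf p 0 0 * cf q 0 0"
  by (simp add: cf_def coeff_mult_0)

lemma I_cf00: "p \<in> An_ideal n \<Longrightarrow> cf p 0 0 = 0"
  unfolding inI by (auto simp: cf00_mult g1_def g2_def g3_def cf_mon)

definition om :: "nat \<Rightarrow> 'a::field bipoly \<Rightarrow> 'a" where
  "om n p = cf p 0 (2*n+2) + cf p n (n+2) + cf p (2*n) 2 + cf p (3*n) 1"

lemma om_add: "om n (p+q) = om n p + om n q" by (simp add: om_def)
lemma om_diff: "om n (p-q) = om n p - om n q" by (simp add: om_def)
lemma om_smult: "om n (smult [:c:] p) = c * om n p" by (simp add: om_def algebra_simps)

lemma om_mon_mult: "om n (mon k l * p) =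
   (if k = 0 \<and> l \<le> 2*n+2 then cf p 0 (2*n+2-l) else 0) +
   (if k \<le> n \<and> l \<le> n+2 then cf p (n-k) (n+2-l) else 0) +
   (if k \<le> 2*n \<and> l \<le> 2 then cf p (2*n-k) (2-l) else 0) +
   (if k \<le> 3*n \<and> l \<le> 1 then cf p (3*n-k) (1-l) else 0)"
  by (simp add: om_def cf_mon_mult)

lemma om_mult_mon: "om n (p * mon k l) = om n (mon k l * p)"
  by (simp add: mult.commute)

context
  fixes n :: nat
  assumes n2: "2 \<le> n"
begin

lemma om_g1: "om n (a * g1 n) = 0"
  unfolding g1_def om_mult_mon om_mon_mult by simp

lemma om_g2: "om n (a * g2 n) = 0"
  using n2 unfolding g2_def right_diff_distrib om_diff om_mult_mon om_mon_mult by simp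

lemma om_g3: "om n (a * g3 n) = 0"
  using n2 unfolding g3_def right_diff_distrib om_diff om_mult_mon om_mon_mult by simp

lemma om_I: "p \<in> An_ideal n \<Longrightarrow> om n p = 0"
  unfolding inI by (auto simp: om_add om_g1 om_g2 om_g3)

lemma om_I_mult: "p \<in> An_ideal n \<Longrightarrow> om n (r * p) = 0"
  by (rule om_I, rule I_mult)

end

lemma in_cls: "p \<in> cls (An_ideal n) p" by (simp add: cls_def)

lemma cls_eq_iff: "cls (An_ideal n) p = cls (An_ideal n) q \<longleftrightarrow> p - q \<in> An_ideal n"
proof
  assume "cls (An_ideal n) p = cls (An_ideal n) q"
  hence "p \<in> cls (An_ideal n) q" using in_cls[of p n] by simp
  thus "p - q \<in> An_ideal n" by (simp add: cls_def)
next
  assume h: "p - q \<in> An_ideal n"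
  show "cls (An_ideal n) p = cls (An_ideal n) q"
  proof (auto simp: cls_def)
    fix r assume "r - p \<in> An_ideal n"
    from I_add[OF this h] show "r - q \<in> An_ideal n" by simp
  next
    fix r assume "r - q \<in> An_ideal n"
    from I_diff[OF this h] show "r - p \<in> An_ideal n" by simp
  qed
qed

lemma qadd_cls: "qadd (An_ideal n) (cls (An_ideal n) p) (cls (An_ideal n) q) = cls (An_ideal n) (p + q)"
proof (auto simp: qadd_def cls_def)
  fix r assume "r - (p+q) \<in> An_ideal n"
  thus "\<exists>a. a - p \<in> An_ideal n \<and> (\<exists>b. b - q \<in> An_ideal n \<and> r - (a + b) \<in> An_ideal n)"
    by (intro exI[of _ p] conjI exI[of _ q]) auto
next
  fix r a b assume h: "a - p \<in> An_ideal n" "b - q \<in> An_ideal n" "r - (a + b) \<in> An_ideal n"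
  have "r - (p+q) = (r - (a+b)) + (a - p) + (b - q)" by (simp add: algebra_simps)
  thus "r - (p+q) \<in> An_ideal n" using h by (metis I_add)
qed

lemma qmul_cls: "qmul (An_ideal n) (cls (An_ideal n) p) (cls (An_ideal n) q) = cls (An_ideal n) (p * q)"
proof (auto simp: qmul_def cls_def)
  fix r assume "r - (p*q) \<in> An_ideal n"
  thus "\<exists>a. a - p \<in> An_ideal n \<and> (\<exists>b. b - q \<in> An_ideal n \<and> r - a * b \<in> An_ideal n)"
    by (intro exI[of _ p] conjI exI[of _ q]) auto
next
  fix r a b assume h: "a - p \<in> An_ideal n" "b - q \<in> An_ideal n" "r - a * b \<in> An_ideal n"
  have "r - p*q = (r - a*b) + (a - p) * b + p * (b - q)" by (simp add: algebra_simps)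
  thus "r - p*q \<in> An_ideal n" using h by (metis I_add I_mult I_mult2)
qed

lemma qsmul_cls: "qsmul (An_ideal n) c (cls (An_ideal n) p) = cls (An_ideal n) (smult [:c:] p)"
proof (auto simp: qsmul_def cls_def)
  fix r assume "r - smult [:c:] p \<in> An_ideal n"
  thus "\<exists>a. a - p \<in> An_ideal n \<and> r - smult [:c:] a \<in> An_ideal n"
    by (intro exI[of _ p] conjI) auto
next
  fix r a assume h: "a - p \<in> An_ideal n" "r - smult [:c:] a \<in> An_ideal n"
  have "r - smult [:c:] p = (r - smult [:c:] a) + smult [:c:] (a - p)" by (simp add: algebra_simps smult_diff_right)
  thus "r - smult [:c:] p \<in> An_ideal n" using h by (metis I_add I_smult)
qed

lemma const_term_cf: "const_term p = cf p 0 0" by (simp add: const_term_def cf_def)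

lemma qmax_iff: "A \<in> qmax (An_ideal n) \<longleftrightarrow> (\<exists>p. A = cls (An_ideal n) p \<and> cf p 0 0 = 0)"
  by (auto simp: qmax_def const_term_cf)

lemma cls_in_qmax: "cls (An_ideal n) p \<in> qmax (An_ideal n) \<longleftrightarrow> cf p 0 0 = 0"
proof
  assume "cls (An_ideal n) p \<in> qmax (An_ideal n)"
  then obtain q where q: "cls (An_ideal n) p = cls (An_ideal n) q" "cf q 0 0 = 0" by (auto simp: qmax_iff)
  hence "p - q \<in> An_ideal n" by (simp add: cls_eq_iff)
  from I_cf00[OF this] q show "cf p 0 0 = 0" by simp
qed (auto simp: qmax_iff)

lemma cls_in_qcarrier: "cls I p \<in> qcarrier I" by (simp add: qcarrier_def)


definition inB :: "nat \<Rightarrow> nat \<Rightarrow> nat \<Rightarrow> bool" where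
  "inB n i j \<longleftrightarrow> (i = 0 \<and> j \<le> 2*n+2) \<or> (1 \<le> i \<and> i \<le> n-1 \<and> j \<le> n+2) \<or> (n \<le> i \<and> i \<le> 2*n \<and> j \<le> 1)"

lemma alg1:
  fixes X Y P Q :: "'b::comm_ring_1"
  shows "X*(Q*Y^5) = ((P*X^3 + X*(Q*Y^2))*(1 + Q*Y))*(P*X^2*Y^2 - Q*Y^4)
     + (-(Y^2*(1+Q*Y)))*(P^2*X^5 - X*(Q*Y^3)) + (X*Q)*(Q^2*Y^7)"
  by (simp add: algebra_simps power2_eq_square power3_eq_cube numeral_eq_Suc)

context
  fixes n :: nat
  assumes n2: "2 \<le> n"
begin

lemma mon_1_n3: "(mon 1 (n+3) :: 'a::field bipoly) \<in> An_ideal n"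
proof -
  obtain m where m: "n = m + 2" using n2 by (metis add.commute le_Suc_ex)
  let ?X = "varX :: 'a bipoly" and ?Y = "varY :: 'a bipoly"
  let ?P = "?X^m" and ?Q = "?Y^m"
  have e1: "(mon 1 (n+3) :: 'a bipoly) = ?X*(?Q*?Y^5)" by (simp add: mon_eq m power_add)
  have e2: "(g2 n :: 'a bipoly) = ?P*?X^2*?Y^2 - ?Q*?Y^4"
    by (simp add: g2_def mon_eq m power_add algebra_simps power2_eq_square numeral_eq_Suc)
  have p1: "z^(2*n+1) = (z^m)^2*z^5" for z :: "'a bipoly"
  proof -
    have "2*n+1 = m+m+5" using m by simp
    hence "z^(2*n+1) = z^(m+m+5)" by (rule arg_cong)
    thus ?thesis by (simp only: power_add power2_eq_square)
  qed
  have p2: "z^(2*n+3) = (z^m)^2*z^7" for z :: "'a bipoly"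
  proof -
    have "2*n+3 = m+m+7" using m by simp
    hence "z^(2*n+3) = z^(m+m+7)" by (rule arg_cong)
    thus ?thesis by (simp only: power_add power2_eq_square)
  qed
  have p3: "z^(n+1) = z^m*z^3" for z :: "'a bipoly"
  proof -
    have "n+1 = m+3" using m by simp
    hence "z^(n+1) = z^(m+3)" by (rule arg_cong)
    thus ?thesis by (simp only: power_add)
  qed
  have e3: "(g3 n :: 'a bipoly) = ?P^2*?X^5 - ?X*(?Q*?Y^3)"
    unfolding g3_def mon_eq p1 p3 by simp
  have e4: "(g1 n :: 'a bipoly) = ?Q^2*?Y^7"
    unfolding g1_def mon_eq p2 by simp
  have "(mon 1 (n+3) :: 'a bipoly) = ((?P*?X^3 + ?X*(?Q*?Y^2))*(1 + ?Q*?Y)) * g2 n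
     + (-(?Y^2*(1+?Q*?Y))) * g3 n + (?X*?Q) * g1 n"
    unfolding e1 e2 e3 e4 by (rule alg1)
  thus ?thesis by (metis I_add I_mult I_g1 I_g2 I_g3)
qed

lemma mon_big_y: "2*n+3 \<le> j \<Longrightarrow> (mon i j :: 'a::field bipoly) \<in> An_ideal n"
proof -
  assume "2*n+3 \<le> j"
  hence "mon i j = mon i (j - (2*n+3)) * (g1 n :: 'a bipoly)" by (simp add: g1_def mon_mult)
  thus ?thesis by (metis I_mult I_g1)
qed

lemma mon_x_y: "1 \<le> i \<Longrightarrow> n+3 \<le> j \<Longrightarrow> (mon i j :: 'a::field bipoly) \<in> An_ideal n"
proof -
  assume "1 \<le> i" "n+3 \<le> j"
  hence "mon i j = mon (i-1) (j-(n+3)) * (mon 1 (n+3) :: 'a bipoly)" by (simp add: mon_mult)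
  thus ?thesis by (metis I_mult mon_1_n3)
qed

lemma red_g2: "n \<le> i \<Longrightarrow> 2 \<le> j \<Longrightarrow> (mon i j - mon (i-n) (j+n) :: 'a::field bipoly) \<in> An_ideal n"
proof -
  assume "n \<le> i" "2 \<le> j"
  hence "mon (i-n) (j-2) * (g2 n :: 'a bipoly) = mon (i-n+n) (j-2+2) - mon (i-n+0) (j-2+(n+2))"
    by (simp add: g2_def mon_mult right_diff_distrib)
  also have "\<dots> = mon i j - mon (i-n) (j+n)"
  proof -
    have h: "i - n + n = i" "j - 2 + 2 = j" "i - n + 0 = i - n" "j-2+(n+2) = j+n"
      using \<open>n \<le> i\<close> \<open>2 \<le> j\<close> by auto
    show ?thesis by (simp only: h)
  qed
  finally have "mon i j - mon (i-n) (j+n) = mon (i-n) (j-2) * (g2 n :: 'a bipoly)" by simp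
  thus ?thesis by (metis I_mult I_g2)
qed

lemma red_g3: "2*n+1 \<le> i \<Longrightarrow> (mon i j - mon (i-2*n) (j+n+1) :: 'a::field bipoly) \<in> An_ideal n"
proof -
  assume "2*n+1 \<le> i"
  hence "mon (i-(2*n+1)) j * (g3 n :: 'a bipoly) = mon (i-(2*n+1) + (2*n+1)) (j+0) - mon (i-(2*n+1)+1) (j+(n+1))"
    by (simp add: g3_def mon_mult right_diff_distrib)
  also have "\<dots> = mon i j - mon (i-2*n) (j+n+1)"
  proof -
    have h: "i-(2*n+1) + (2*n+1) = i" "j + 0 = j" "i-(2*n+1)+1 = i - 2*n" "j+(n+1) = j+n+1"
      using \<open>2*n+1 \<le> i\<close> by auto
    show ?thesis by (simp only: h)
  qed
  finally have "mon i j - mon (i-2*n) (j+n+1) = mon (i-(2*n+1)) j * (g3 n :: 'a bipoly)" by simp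
  thus ?thesis by (metis I_mult I_g3)
qed

lemma red_mon: "(mon i j :: 'a::field bipoly) \<in> An_ideal n \<or> (\<exists>k l. inB n k l \<and> (mon i j - mon k l :: 'a bipoly) \<in> An_ideal n)"
proof (induction i arbitrary: j rule: less_induct)
  case (less i)
  show ?case
  proof (cases "inB n i j")
    case True thus ?thesis by (intro disjI2 exI[of _ i] exI[of _ j]) simp
  next
    case nB: False
    show ?thesis
    proof (cases "2*n+3 \<le> j")
      case True thus ?thesis using mon_big_y by blast
    next
      case jsmall: False
      show ?thesis
      proof (cases "2*n+1 \<le> i")
        case True
        have r: "(mon i j - mon (i-2*n) (j+n+1) :: 'a bipoly) \<in> An_ideal n" using red_g3 True by blast
        have lt: "i - 2*n < i" using True n2 by simp
        from less[OF lt, of "j+n+1"] show ?thesis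
        proof
          assume "(mon (i-2*n) (j+n+1) :: 'a bipoly) \<in> An_ideal n"
          from I_add[OF r this] show ?thesis by simp
        next
          assume "\<exists>k l. inB n k l \<and> (mon (i-2*n) (j+n+1) - mon k l :: 'a bipoly) \<in> An_ideal n"
          then obtain k l where kl: "inB n k l" "(mon (i-2*n) (j+n+1) - mon k l :: 'a bipoly) \<in> An_ideal n" by blast
          from I_add[OF r kl(2)] kl(1) show ?thesis by auto
        qed
      next
        case ismall: False
        show ?thesis
        proof (cases "n \<le> i")
          case True
          hence j2: "2 \<le> j" using nB ismall unfolding inB_def by auto
          have r: "(mon i j - mon (i-n) (j+n) :: 'a bipoly) \<in> An_ideal n" using red_g2 True j2 by blast
          have lt: "i - n < i" using True n2 by simp
          from less[OF lt, of "j+n"] show ?thesis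
          proof
            assume "(mon (i-n) (j+n) :: 'a bipoly) \<in> An_ideal n"
            from I_add[OF r this] show ?thesis by simp
          next
            assume "\<exists>k l. inB n k l \<and> (mon (i-n) (j+n) - mon k l :: 'a bipoly) \<in> An_ideal n"
            then obtain k l where kl: "inB n k l" "(mon (i-n) (j+n) - mon k l :: 'a bipoly) \<in> An_ideal n" by blast
            from I_add[OF r kl(2)] kl(1) show ?thesis by auto
          qed
        next
          case False
          hence "1 \<le> i" "n+3 \<le> j" using nB jsmall unfolding inB_def by auto
          thus ?thesis using mon_x_y by blast
        qed
      qed
    qed
  qed
qed

definition NFset :: "'a::field bipoly set" where
  "NFset = {p. \<exists>b. p - b \<in> An_ideal n \<and> (\<forall>i j. \<not> inB n i j \<longrightarrow> cf b i j = 0)}"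

lemma NF_add: "p \<in> NFset \<Longrightarrow> q \<in> NFset \<Longrightarrow> p + q \<in> NFset"
proof -
  assume "p \<in> NFset" "q \<in> NFset"
  then obtain b c where b: "p - b \<in> An_ideal n" "\<forall>i j. \<not> inB n i j \<longrightarrow> cf b i j = 0"
    and c: "q - c \<in> An_ideal n" "\<forall>i j. \<not> inB n i j \<longrightarrow> cf c i j = 0" by (auto simp: NFset_def)
  have "(p + q) - (b + c) = (p - b) + (q - c)" by simp
  hence "(p + q) - (b + c) \<in> An_ideal n" using b c I_add by metis
  thus ?thesis using b c unfolding NFset_def by (intro CollectI exI[of _ "b+c"]) auto
qed

lemma NF_0: "0 \<in> NFset" unfolding NFset_def by (intro CollectI exI[of _ 0]) auto

lemma NF_sum: "finite A \<Longrightarrow> (\<And>a. a \<in> A \<Longrightarrow> f a \<in> NFset) \<Longrightarrow> sum f A \<in> NFset"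
  by (induction A rule: finite_induct) (auto intro: NF_add NF_0)

lemma NF_mon: "smult [:c:] (mon i j) \<in> NFset"
proof (cases "(mon i j :: 'a bipoly) \<in> An_ideal n")
  case True
  thus ?thesis unfolding NFset_def by (intro CollectI exI[of _ 0]) (auto intro: I_smult)
next
  case False
  then obtain k l where kl: "inB n k l" "(mon i j - mon k l :: 'a bipoly) \<in> An_ideal n"
    using red_mon by blast
  have "smult [:c:] (mon i j) - smult [:c:] (mon k l) = smult [:c:] (mon i j - mon k l :: 'a bipoly)"
    by (simp add: smult_diff_right)
  hence "smult [:c:] (mon i j) - smult [:c:] (mon k l) \<in> An_ideal n" using kl I_smult by metis
  thus ?thesis unfolding NFset_def using kl(1)
    by (intro CollectI exI[of _ "smult [:c:] (mon k l)"]) (auto simp: cf_mon)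
qed

end

lemma monom_as_mon: "monom (monom c j) i = smult [:c:] (mon i j :: 'a::field bipoly)"
  by (simp add: mon_def smult_monom)

lemma bipoly_sum: "(p :: 'a::field bipoly) = (\<Sum>i\<le>degree p. \<Sum>j\<le>degree (coeff p i). smult [:cf p i j:] (mon i j))"
proof -
  have "p = (\<Sum>i\<le>degree p. monom (coeff p i) i)" by (simp add: poly_as_sum_of_monoms)
  also have "\<dots> = (\<Sum>i\<le>degree p. monom (\<Sum>j\<le>degree (coeff p i). monom (coeff (coeff p i) j) j) i)"
    by (simp add: poly_as_sum_of_monoms)
  also have "\<dots> = (\<Sum>i\<le>degree p. \<Sum>j\<le>degree (coeff p i). monom (monom (coeff (coeff p i) j) j) i)"
    by (simp add: monom_sum)
  finally show ?thesis by (simp add: monom_as_mon cf_def)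
qed

context
  fixes n :: nat
  assumes n2: "2 \<le> n"
begin

lemma NF_all: "(p :: 'a::field bipoly) \<in> NFset n"
  by (subst bipoly_sum, intro NF_sum[OF n2] NF_mon[OF n2]) auto

end


context
  fixes n :: nat
  assumes n2: "2 \<le> n"
begin

lemma indep:
  fixes b :: "'a::field bipoly"
  assumes supp: "\<And>i j. \<not> inB n i j \<Longrightarrow> cf b i j = 0"
    and tst: "\<And>k l. om n (mon k l * b) = 0"
  shows "cf b i j = 0"
proof -
  have t: "(if k = 0 \<and> l \<le> 2*n+2 then cf b 0 (2*n+2-l) else 0) +
   (if k \<le> n \<and> l \<le> n+2 then cf b (n-k) (n+2-l) else 0) +
   (if k \<le> 2*n \<and> l \<le> 2 then cf b (2*n-k) (2-l) else 0) +
   (if k \<le> 3*n \<and> l \<le> 1 then cf b (3*n-k) (1-l) else 0) = 0" for k l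
    using tst[of k l] by (simp add: om_mon_mult)
  have S1: "cf b i j = 0" if "i \<le> n-1" "j \<le> 1" for i j
  proof -
    have a: "3*n - i \<noteq> 0" "\<not> 3*n - i \<le> n" "\<not> 3*n-i \<le> 2*n" "3*n - i \<le> 3*n" "3*n - (3*n-i) = i" "1 - (1-j) = j" "1 - j \<le> 1"
      using that n2 by auto
    show ?thesis using t[of "3*n-i" "1-j"] a by simp
  qed
  have S2: "cf b i 0 = 0" if "n \<le> i" "i \<le> 2*n-1" for i
  proof -
    have a: "3*n-i \<noteq> 0" "\<not> 3*n-i \<le> n" "3*n-i \<le> 2*n" "2*n - (3*n-i) = i - n" "3*n-i \<le> 3*n" "3*n-(3*n-i) = i"
      using that n2 by auto
    have z: "cf b (i-n) 1 = 0" using S1 that by auto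
    show ?thesis using t[of "3*n-i" 1] a z by simp
  qed
  have S3a: "cf b i j = 0" if "i \<le> n-1" "j \<le> n-1" for i j
  proof (cases "i = 0")
    case True
    have a: "2*n+2-j \<le> 2*n+2" "2*n+2-(2*n+2-j) = j" "\<not> 2*n+2-j \<le> n+2" "\<not> 2*n+2-j \<le> 2" "\<not> 2*n+2-j \<le> 1"
      using that n2 by auto
    show ?thesis using t[of 0 "2*n+2-j"] a True by simp
  next
    case False
    have a: "n - i \<noteq> 0" "n-i \<le> n" "n+2-j \<le> n+2" "n-(n-i) = i" "n+2-(n+2-j) = j" "\<not> n+2-j \<le> 2" "\<not> n+2-j \<le> 1"
      using that n2 False by auto
    show ?thesis using t[of "n-i" "n+2-j"] a by simp
  qed
  have S3b: "cf b i n = 0" if "i \<le> n-1" for i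
  proof (cases "i = 0")
    case True
    have a: "n+2 \<le> 2*n+2" "2*n+2-(n+2) = n" "n+2-(n+2) = 0" "\<not> n+2 \<le> 2" "\<not> n+2 \<le> 1"
      using n2 by auto
    have z: "cf b n 0 = 0" using S2 n2 by auto
    show ?thesis using t[of 0 "n+2"] a z True by simp
  next
    case False
    have a: "n - i \<noteq> 0" "n-i \<le> n" "n-(n-i) = i" "n+2-2 = n" "n-i \<le> 2*n" "2*n-(n-i) = n+i"
      using that n2 False by auto
    have z: "cf b (n+i) 0 = 0" using S2 that n2 by auto
    show ?thesis using t[of "n-i" 2] a z by simp
  qed
  have S3ab: "cf b i j = 0" if "i \<le> n-1" "j \<le> n" for i j
    using S3a S3b that by (cases "j = n") auto
  have S4: "cf b (n+i) 1 = 0" if "i \<le> n-1" for i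
  proof -
    have a: "2*n-i \<noteq> 0" "\<not> 2*n-i \<le> n" "2*n-i \<le> 2*n" "2*n-(2*n-i) = i" "2*n-i \<le> 3*n" "3*n-(2*n-i) = n+i"
      using that n2 by auto
    have z: "cf b i 2 = 0" using S3ab that n2 by auto
    show ?thesis using t[of "2*n-i" 0] a z by simp
  qed
  have S3c: "cf b i (n+1) = 0" if "i \<le> n-1" for i
  proof (cases "i = 0")
    case True
    have a: "n+1 \<le> 2*n+2" "2*n+2-(n+1) = n+1" "n+2-(n+1) = 1" "\<not> n+1 \<le> 2" "\<not> n+1 \<le> 1"
      using n2 by auto
    have z: "cf b n 1 = 0" using S4[of 0] by simp
    show ?thesis using t[of 0 "n+1"] a z True by simp
  next
    case False
    have a: "n - i \<noteq> 0" "n-i \<le> n" "n-(n-i) = i" "n+2-1 = n+1" "n-i \<le> 2*n" "2*n-(n-i) = n+i" "n-i \<le> 3*n" "3*n-(n-i) = 2*n+i"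
      using that n2 False by auto
    have z: "cf b (n+i) 1 = 0" using S4 that by auto
    have z2: "cf b (2*n+i) 0 = 0" using supp False that n2 by (simp add: inB_def)
    show ?thesis using t[of "n-i" 1] a z z2 by simp
  qed
  have S3d: "cf b i (n+2) = 0" if "1 \<le> i" "i \<le> n-1" for i
  proof -
    have a: "n - i \<noteq> 0" "n-i \<le> n" "n-(n-i) = i" "n-i \<le> 2*n" "2*n-(n-i) = n+i" "n-i \<le> 3*n" "3*n-(n-i) = 2*n+i"
      using that n2 by auto
    have z: "cf b (n+i) 2 = 0" "cf b (2*n+i) 1 = 0" using supp that n2 by (simp_all add: inB_def)
    show ?thesis using t[of "n-i" 0] a z by simp
  qed
  have S5d: "cf b 0 j = 0" if "n+2 \<le> j" "j \<le> 2*n-1" for j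
  proof -
    have a: "2*n+2-j \<le> 2*n+2" "2*n+2-(2*n+2-j) = j" "2*n+2-j \<le> n+2" "n+2-(2*n+2-j) = j-n" "\<not> 2*n+2-j \<le> 2" "\<not> 2*n+2-j \<le> 1"
      using that n2 by auto
    have "\<not> n \<le> n - 1" "\<not> j - n \<le> 1" using that n2 by arith+
    hence z: "cf b n (j-n) = 0" using supp[of n "j-n"] unfolding inB_def by auto
    show ?thesis using t[of 0 "2*n+2-j"] a z by simp
  qed
  have S8: "cf b (2*n) 0 = 0"
  proof -
    have a: "n \<noteq> 0" "n+2-1 = n+1" "n \<le> 2*n" "2*n - n = n" "n \<le> 3*n" "3*n-n = 2*n"
      using n2 by auto
    have z: "cf b 0 (n+1) = 0" "cf b n 1 = 0" using S3c[of 0] S4[of 0] by auto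
    show ?thesis using t[of n 1] a z by simp
  qed
  have S9: "cf b 0 (2*n) = 0"
  proof -
    have a: "2 \<le> 2*n+2" "2*n+2-2 = 2*n" "n+2-2 = n" "2 \<le> n+2"
      using n2 by auto
    have z: "cf b n n = 0" using supp n2 by (simp add: inB_def)
    show ?thesis using t[of 0 2] a z S8 by simp
  qed
  have S10: "cf b (2*n) 1 = 0"
  proof -
    have a: "n \<noteq> 0" "n \<le> 2*n" "2*n - n = n" "n \<le> 3*n" "3*n-n = 2*n"
      using n2 by auto
    have z0: "cf b 0 (n+2) = 0"
      using S5d[of "n+2"] S9 n2 by (cases "n+2 = 2*n") auto
    have z: "cf b n 2 = 0" using supp n2 by (simp add: inB_def)
    show ?thesis using t[of n 0] a z z0 by simp
  qed
  have S11: "cf b 0 (2*n+1) = 0"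
  proof -
    have a: "2*n+2-1 = 2*n+1" "n+2-1 = n+1"
      using n2 by auto
    have z: "cf b n (n+1) = 0" "cf b (3*n) 0 = 0" using supp n2 by (simp_all add: inB_def)
    show ?thesis using t[of 0 1] a z S10 by simp
  qed
  have S12: "cf b 0 (2*n+2) = 0"
  proof -
    have z: "cf b n (n+2) = 0" "cf b (2*n) 2 = 0" "cf b (3*n) 1 = 0" using supp n2 by (simp_all add: inB_def)
    show ?thesis using t[of 0 0] z by simp
  qed
  show ?thesis
  proof (cases "inB n i j")
    case False thus ?thesis using supp by blast
  next
    case True
    show ?thesis
    proof (cases "i \<le> n-1")
      case True
      show ?thesis
      proof (cases "j \<le> n+1")
        case True thus ?thesis using S3ab S3c \<open>i \<le> n-1\<close> by (cases "j = n+1") auto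
      next
        case False
        show ?thesis
        proof (cases "i = 0")
          case False
          hence "j = n+2" using \<open>inB n i j\<close> \<open>\<not> j \<le> n+1\<close> by (auto simp: inB_def)
          thus ?thesis using S3d False \<open>i \<le> n-1\<close> by auto
        next
          case True
          hence "j \<le> 2*n+2" using \<open>inB n i j\<close> by (auto simp: inB_def)
          have "(n+2 \<le> j \<and> j \<le> 2*n-1) \<or> j = 2*n \<or> j = 2*n+1 \<or> j = 2*n+2"
            using \<open>j \<le> 2*n+2\<close> \<open>\<not> j \<le> n+1\<close> by arith
          thus ?thesis using S5d[of j] S9 S11 S12 True by auto
        qed
      qed
    next
      case False
      hence ij: "n \<le> i" "i \<le> 2*n" "j \<le> 1" using True by (auto simp: inB_def)
      show ?thesis
      proof (cases "i = 2*n")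
        case True thus ?thesis using S8 S10 ij by (cases j) auto
      next
        case False
        hence "i \<le> 2*n-1" using ij by auto
        thus ?thesis using S2 S4[of "i-n"] ij by (cases j) auto
      qed
    qed
  qed
qed

lemma T_lemma:
  fixes p :: "'a::field bipoly"
  assumes "\<And>k l. om n (mon k l * p) = 0"
  shows "p \<in> An_ideal n"
proof -
  from NF_all[OF n2, of p] obtain b where b: "p - b \<in> An_ideal n" "\<forall>i j. \<not> inB n i j \<longrightarrow> cf b i j = 0"
    by (auto simp: NFset_def[OF n2])
  have "om n (mon k l * b) = 0" for k l
  proof -
    have "mon k l * b = mon k l * p - mon k l * (p - b)" by (simp add: algebra_simps)
    thus ?thesis using assms[of k l] om_I_mult[OF n2 b(1)] by (simp add: om_diff)
  qed
  hence "cf b i j = 0" for i j using indep b(2) by blast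
  hence "b = 0" by (intro poly_eqI) (simp add: cf_def poly_eq_iff)
  thus ?thesis using b by simp
qed

end


definition sc :: "nat \<Rightarrow> 'a::field bipoly" where "sc n = mon 0 (2*n+2)"

definition Hyp :: "nat \<Rightarrow> 'a::field bipoly \<Rightarrow> 'a bipoly set set" where
  "Hyp n e = {cls (An_ideal n) p | p. cf p 0 0 = 0 \<and> om n (e * p) = 0}"

context
  fixes n :: nat
  assumes n2: "2 \<le> n"
begin

lemma om_sc: "om n (sc n :: 'a::field bipoly) = 1"
  using n2 by (simp add: om_def sc_def cf_mon)

lemma om_y_sc: "om n (varY * sc n :: 'a::field bipoly) = 0"
  using n2 by (simp add: om_def sc_def cf_mon varY_mon mon_mult)

lemma cf00_sc: "cf (sc n :: 'a::field bipoly) 0 0 = 0"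
  by (simp add: sc_def cf_mon)

lemma sc_mult_m: "cf q 0 0 = 0 \<Longrightarrow> (sc n * q :: 'a::field bipoly) \<in> An_ideal n"
proof (rule T_lemma[OF n2])
  fix k l assume q: "cf q 0 0 = 0"
  have e: "mon k l * (sc n * q) = mon k (l + (2*n+2)) * (q :: 'a bipoly)"
    unfolding sc_def mult.assoc[symmetric] mon_mult by simp
  show "om n (mon k l * (sc n * q)) = 0" unfolding e using q by (simp add: om_mon_mult)
qed

lemma socle_iff: "A \<in> socle (An_ideal n :: 'a::field bipoly set) \<longleftrightarrow> (\<exists>c. A = cls (An_ideal n) (smult [:c:] (sc n)))"
proof
  assume "\<exists>c. A = cls (An_ideal n) (smult [:c:] (sc n))"
  then obtain c where A: "A = cls (An_ideal n) (smult [:c:] (sc n))" by blast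
  show "A \<in> socle (An_ideal n)"
    unfolding socle_def
  proof (intro CollectI conjI ballI)
    show "A \<in> qcarrier (An_ideal n)" using A by (simp add: cls_in_qcarrier)
  next
    fix t :: "'a bipoly set" assume "t \<in> qmax (An_ideal n)"
    then obtain q where t: "t = cls (An_ideal n) q" "cf q 0 0 = 0" by (auto simp: qmax_iff)
    have "smult [:c:] (sc n) * q = smult [:c:] (sc n * (q :: 'a bipoly))" by simp
    hence "smult [:c:] (sc n) * q \<in> An_ideal n" using sc_mult_m[OF t(2)] by (metis I_smult)
    thus "qmul (An_ideal n) A t = qzero (An_ideal n)"
      using A t by (simp add: qmul_cls qzero_def cls_eq_iff)
  qed
next
  assume "A \<in> socle (An_ideal n)"
  hence A1: "A \<in> qcarrier (An_ideal n)" and A2: "\<forall>t\<in>qmax (An_ideal n). qmul (An_ideal n) A t = qzero (An_ideal n)"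
    by (auto simp: socle_def)
  from A1 obtain p where p: "A = cls (An_ideal n) p" by (auto simp: qcarrier_def)
  have x: "p * varX \<in> An_ideal n"
  proof -
    have "cls (An_ideal n) varX \<in> qmax (An_ideal n)" by (simp add: cls_in_qmax varX_mon cf_mon)
    hence "qmul (An_ideal n) A (cls (An_ideal n) varX) = qzero (An_ideal n)" using A2 by blast
    thus ?thesis using p by (simp add: qmul_cls qzero_def cls_eq_iff)
  qed
  have y: "p * varY \<in> An_ideal n"
  proof -
    have "cls (An_ideal n) varY \<in> qmax (An_ideal n)" by (simp add: cls_in_qmax varY_mon cf_mon)
    hence "qmul (An_ideal n) A (cls (An_ideal n) varY) = qzero (An_ideal n)" using A2 by blast
    thus ?thesis using p by (simp add: qmul_cls qzero_def cls_eq_iff)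
  qed
  let ?c = "om n p"
  have "p - smult [:?c:] (sc n) \<in> An_ideal n"
  proof (rule T_lemma[OF n2])
    fix k l
    show "om n (mon k l * (p - smult [:?c:] (sc n))) = 0"
    proof (cases "k = 0 \<and> l = 0")
      case True thus ?thesis by (simp add: mon_00 om_diff om_smult om_sc)
    next
      case False
      have sm: "mon k l * smult [:?c:] (sc n) \<in> An_ideal n"
      proof -
        have "sc n * mon k l \<in> An_ideal n" using False by (intro sc_mult_m) (auto simp: cf_mon)
        hence "smult [:?c:] (sc n * mon k l) \<in> An_ideal n" by (rule I_smult)
        thus ?thesis by (simp add: mult.commute)
      qed
      have pm: "mon k l * p \<in> An_ideal n"
      proof (cases "k = 0")
        case True
        hence "l \<noteq> 0" using False by simp
        hence "mon k l * p = mon k (l-1) * (p * varY)" using True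
          by (simp add: varY_mon mult.assoc[symmetric] mult.commute[of _ p] mon_mult)
        thus ?thesis using y by (metis I_mult)
      next
        case False
        hence "mon k l * p = mon (k-1) l * (p * varX)"
          by (simp add: varX_mon mult.assoc[symmetric] mult.commute[of _ p] mon_mult)
        thus ?thesis using x by (metis I_mult)
      qed
      show ?thesis using om_I[OF n2 sm] om_I[OF n2 pm] by (simp add: right_diff_distrib om_diff)
    qed
  qed
  hence "A = cls (An_ideal n) (smult [:?c:] (sc n))" using p by (simp add: cls_eq_iff)
  thus "\<exists>c. A = cls (An_ideal n) (smult [:c:] (sc n))" by blast
qed

lemma Hyp_mem: "cls (An_ideal n) p \<in> Hyp n e \<longleftrightarrow> cf p 0 0 = 0 \<and> om n (e * p) = 0"
proof
  assume "cls (An_ideal n) p \<in> Hyp n e"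
  then obtain q where q: "cls (An_ideal n) p = cls (An_ideal n) q" "cf q 0 0 = 0" "om n (e * q) = 0"
    by (auto simp: Hyp_def)
  hence d: "p - q \<in> An_ideal n" by (simp add: cls_eq_iff)
  have "cf p 0 0 = 0" using I_cf00[OF d] q by simp
  moreover have "om n (e * p) = 0"
  proof -
    have "om n (e * (p - q)) = 0" by (rule om_I_mult[OF n2 d])
    thus ?thesis using q by (simp add: right_diff_distrib om_diff)
  qed
  ultimately show "cf p 0 0 = 0 \<and> om n (e * p) = 0" by simp
qed (auto simp: Hyp_def)

lemma Hyp_compl:
  assumes e: "om n (e * sc n) = (1::'a::field)"
  shows "compl_hyperplane (An_ideal n) (Hyp n e)"
  unfolding compl_hyperplane_def
proof (intro conjI)
  show "qsubspace (An_ideal n) (Hyp n e)"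
    unfolding qsubspace_def
  proof (intro conjI ballI allI)
    show "Hyp n e \<subseteq> qcarrier (An_ideal n)" by (auto simp: Hyp_def cls_in_qcarrier)
    show "qzero (An_ideal n) \<in> Hyp n e" by (simp add: qzero_def Hyp_mem om_def)
  next
    fix u v :: "'a bipoly set" assume "u \<in> Hyp n e" "v \<in> Hyp n e"
    then obtain p q where "u = cls (An_ideal n) p" "v = cls (An_ideal n) q"
      "cf p 0 0 = 0" "om n (e*p) = 0" "cf q 0 0 = 0" "om n (e*q) = 0" by (auto simp: Hyp_def)
    thus "qadd (An_ideal n) u v \<in> Hyp n e" by (simp add: qadd_cls Hyp_mem distrib_left om_add)
  next
    fix c and u :: "'a bipoly set" assume "u \<in> Hyp n e"
    then obtain p where "u = cls (An_ideal n) p" "cf p 0 0 = 0" "om n (e*p) = 0" by (auto simp: Hyp_def)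
    thus "qsmul (An_ideal n) c u \<in> Hyp n e" by (simp add: qsmul_cls Hyp_mem om_smult)
  qed
  show "Hyp n e \<subseteq> qmax (An_ideal n)" by (auto simp: Hyp_def cls_in_qmax)
  show "{qadd (An_ideal n) u s |u s. u \<in> Hyp n e \<and> s \<in> socle (An_ideal n)} = qmax (An_ideal n)"
  proof (intro equalityI subsetI)
    fix A :: "'a bipoly set" assume "A \<in> {qadd (An_ideal n) u s |u s. u \<in> Hyp n e \<and> s \<in> socle (An_ideal n)}"
    then obtain u s where us: "A = qadd (An_ideal n) u s" "u \<in> Hyp n e" "s \<in> socle (An_ideal n)" by blast
    from us(2) obtain p where p: "u = cls (An_ideal n) p" "cf p 0 0 = 0" by (auto simp: Hyp_def)
    from us(3) obtain c where c: "s = cls (An_ideal n) (smult [:c:] (sc n))" by (auto simp: socle_iff)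
    show "A \<in> qmax (An_ideal n)" using us(1) p c by (simp add: qadd_cls cls_in_qmax cf00_sc)
  next
    fix A :: "'a bipoly set" assume "A \<in> qmax (An_ideal n)"
    then obtain p where p: "A = cls (An_ideal n) p" "cf p 0 0 = 0" by (auto simp: qmax_iff)
    let ?c = "om n (e * p)"
    have u: "cls (An_ideal n) (p - smult [:?c:] (sc n)) \<in> Hyp n e"
      using p(2) e by (simp add: Hyp_mem cf00_sc right_diff_distrib om_diff om_smult)
    have s: "cls (An_ideal n) (smult [:?c:] (sc n)) \<in> socle (An_ideal n)" by (auto simp: socle_iff)
    have "A = qadd (An_ideal n) (cls (An_ideal n) (p - smult [:?c:] (sc n))) (cls (An_ideal n) (smult [:?c:] (sc n)))"
      using p by (simp add: qadd_cls)
    thus "A \<in> {qadd (An_ideal n) u s |u s. u \<in> Hyp n e \<and> s \<in> socle (An_ideal n)}" using u s by blast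
  qed
  show "Hyp n e \<inter> socle (An_ideal n) = {qzero (An_ideal n)}"
  proof (intro equalityI subsetI)
    fix A :: "'a bipoly set" assume "A \<in> Hyp n e \<inter> socle (An_ideal n)"
    then obtain c where c: "A = cls (An_ideal n) (smult [:c:] (sc n))" "A \<in> Hyp n e" by (auto simp: socle_iff)
    hence "om n (e * smult [:c:] (sc n)) = 0" by (simp add: Hyp_mem)
    hence "c = 0" using e by (simp add: om_smult)
    thus "A \<in> {qzero (An_ideal n)}" using c by (simp add: qzero_def)
  next
    fix A :: "'a bipoly set" assume "A \<in> {qzero (An_ideal n)}"
    hence A: "A = cls (An_ideal n) (smult [:0:] (sc n))" by (simp add: qzero_def)
    have "A \<in> Hyp n e" using A by (simp add: Hyp_mem om_def)
    moreover have "A \<in> socle (An_ideal n)" unfolding socle_iff by (rule exI[of _ 0]) (rule A)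
    ultimately show "A \<in> Hyp n e \<inter> socle (An_ideal n)" by blast
  qed
qed

lemma U0_compl: "compl_hyperplane (An_ideal n) (Hyp n (1 :: 'a::field bipoly))"
  by (rule Hyp_compl) (simp add: om_sc)

lemma V_compl: "compl_hyperplane (An_ideal n) (Hyp n (1 + varY :: 'a::field bipoly))"
  by (rule Hyp_compl) (simp add: distrib_right om_add om_sc om_y_sc)

end


lemma char_facts:
  assumes n2: "2 \<le> n" and ch: "CHAR('a::field) = 0 \<or> (coprime CHAR('a) n \<and> coprime CHAR('a) (n - 1))"
  shows "of_nat n \<noteq> (0::'a)" "of_nat (n-1) \<noteq> (0::'a)"
proof -
  have gen: "of_nat m \<noteq> (0::'a)" if m: "m \<noteq> 0" "CHAR('a) = 0 \<or> coprime CHAR('a) m" for m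
  proof
    assume "of_nat m = (0::'a)"
    hence dv: "CHAR('a) dvd m" by (simp add: of_nat_eq_0_iff_char_dvd)
    show False
    proof (cases "CHAR('a) = 0")
      case True thus False using dv m by simp
    next
      case False
      hence "coprime CHAR('a) m" using m by simp
      hence "is_unit CHAR('a)" using coprime_common_divisor[OF _ dvd_refl dv] by blast
      hence "CHAR('a) = 1" by simp
      thus False by simp
    qed
  qed
  show "of_nat n \<noteq> (0::'a)" using gen[of n] n2 ch by auto
  show "of_nat (n-1) \<noteq> (0::'a)" using gen[of "n-1"] n2 ch by auto
qed

lemma two_ne0:
  assumes "of_nat n \<noteq> (0::'a::field)" "of_nat (n-1) \<noteq> (0::'a)"
  shows "(2::'a) \<noteq> 0"
proof
  assume h: "(2::'a) = 0"
  have "even (n * (n-1))" by (cases "even n") auto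
  then obtain k where k: "n * (n-1) = 2 * k" by (rule evenE)
  have "(of_nat n * of_nat (n-1) :: 'a) = of_nat (n*(n-1))" by simp
  also have "\<dots> = 2 * of_nat k" using k by simp
  also have "\<dots> = 0" using h by simp
  finally show False using assms by simp
qed

lemma aux_field: "A = B + K \<Longrightarrow> A * D * c = B * D * c \<Longrightarrow> K * D * c = (0::'a::field)"
  by (simp add: algebra_simps)

lemma final_alg:
  fixes a d e c :: "'a::field"
  assumes n2: "2 \<le> n" and d: "d \<noteq> 0" and a: "a \<noteq> 0"
    and h1: "a^(2*n) = d^(n+1)" and h2: "a^(3*n) = d^(2*n+1)"
    and E5: "of_nat (2*n+1) * a^(2*n) * e = of_nat (n+1) * a * d^n * c + e * d^(n+1)"
    and AB: "of_nat (2*n+1) * d^(2*n) * c = of_nat (3*n) * a^(3*n-1) * e"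
    and c1: "of_nat n \<noteq> (0::'a)" and c2: "of_nat (n-1) \<noteq> (0::'a)"
  shows "c = 0"
proof -
  have E5': "of_nat (2*n) * d^(n+1) * e = of_nat (n+1) * a * d^n * c"
    using E5 h1 by (simp add: algebra_simps)
  have dn: "d^(n+1) = d^n * d" by simp
  have E5'': "of_nat (2*n) * d * e = of_nat (n+1) * a * c"
  proof -
    have "d^n * (of_nat (2*n) * d * e) = d^n * (of_nat (n+1) * a * c)"
      using E5' by (simp add: dn algebra_simps)
    thus ?thesis using d by simp
  qed
  have s3: "3*n = Suc (3*n-1)" using n2 by simp
  have a3: "a^(3*n) = a^(3*n-1) * a" by (subst s3) (simp only: power_Suc2)
  have "of_nat (2*n) * d * (of_nat (2*n+1) * d^(2*n) * c) = of_nat (2*n) * d * (of_nat (3*n) * a^(3*n-1) * e)"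
    using AB by simp
  also have "\<dots> = of_nat (3*n) * a^(3*n-1) * (of_nat (2*n) * d * e)" by (simp add: algebra_simps)
  also have "\<dots> = of_nat (3*n) * of_nat (n+1) * a^(3*n) * c" using E5'' a3 by (simp add: algebra_simps)
  also have "\<dots> = of_nat (3*n) * of_nat (n+1) * d^(2*n+1) * c" using h2 by simp
  finally have eq: "of_nat (2*n) * of_nat (2*n+1) * d^(2*n+1) * c = of_nat (3*n) * of_nat (n+1) * d^(2*n+1) * c"
    by (simp add: algebra_simps)
  have nat_eq: "2*n*(2*n+1) = 3*n*(n+1) + n*(n-1)" using n2
    by (cases n) (auto simp: algebra_simps)
  have "(of_nat (2*n) * of_nat (2*n+1) :: 'a) = of_nat (2*n*(2*n+1))" by (simp only: of_nat_mult)
  also have "\<dots> = of_nat (3*n*(n+1) + n*(n-1))" by (simp only: nat_eq)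
  also have "\<dots> = of_nat (3*n) * of_nat (n+1) + of_nat n * of_nat (n-1)" by (simp only: of_nat_mult of_nat_add)
  finally have "(of_nat (2*n) * of_nat (2*n+1) :: 'a) = of_nat (3*n) * of_nat (n+1) + of_nat n * of_nat (n-1)" .
  from aux_field[OF this eq] have "of_nat n * of_nat (n-1) * d^(2*n+1) * c = 0" .
  moreover have "of_nat n * of_nat (n-1) * d^(2*n+1) \<noteq> (0::'a)" using c1 c2 d
    by (metis mult_eq_0_iff power_not_zero)
  ultimately show "c = 0" by (metis mult_eq_0_iff)
qed


lemma ulow_c0_1: "cf p 0 0 = 0 \<Longrightarrow> ulow 1 (coeff p 0)"
  by (simp add: ulow_def cf_def)
lemma ulow_c0_2: "cf p 0 0 = 0 \<Longrightarrow> cf p 0 1 = 0 \<Longrightarrow> ulow 2 (coeff p 0)"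
  by (auto simp add: ulow_def cf_def less_Suc_eq numeral_2_eq_2)
lemma ulow_c1_1: "cf p 1 0 = 0 \<Longrightarrow> ulow 1 (coeff p 1)"
  by (simp add: ulow_def cf_def)
lemma ulow_Y0_1: "cf p 0 0 = 0 \<Longrightarrow> ulow 1 (Y0 p)"
  by (simp add: ulow_def coeff_Y0)
lemma ulow_Y0_2: "cf p 0 0 = 0 \<Longrightarrow> cf p 1 0 = 0 \<Longrightarrow> ulow 2 (Y0 p)"
  by (auto simp add: ulow_def coeff_Y0 less_Suc_eq numeral_2_eq_2)
lemma ulow_Y0_3: "cf p 0 0 = 0 \<Longrightarrow> cf p 1 0 = 0 \<Longrightarrow> cf p 2 0 = 0 \<Longrightarrow> ulow 3 (Y0 p)"
  by (auto simp add: ulow_def coeff_Y0 less_Suc_eq numeral_2_eq_2 numeral_3_eq_3)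
lemma ulow_Y1_1: "cf p 0 1 = 0 \<Longrightarrow> ulow 1 (Y1 p)"
  by (simp add: ulow_def coeff_Y1)
lemma ulow_smult: "ulow k r \<Longrightarrow> ulow k (smult c r)"
  by (simp add: ulow_def)
lemma coeff_smult': "coeff (smult c r) k = c * coeff r k" by simp

lemma w11_1: "cf p 0 0 = 0 \<Longrightarrow> wlow 1 1 1 p" by (simp add: wlow_def)
lemma w12_1: "cf p 0 0 = 0 \<Longrightarrow> wlow 1 2 1 p" by (simp add: wlow_def)
lemma w13_1: "cf p 0 0 = 0 \<Longrightarrow> wlow 1 3 1 p" by (simp add: wlow_def)
lemma w12_2: "cf p 0 0 = 0 \<Longrightarrow> cf p 1 0 = 0 \<Longrightarrow> wlow 1 2 2 p"
  unfolding wlow_def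
proof (intro allI impI)
  fix i j :: nat assume "cf p 0 0 = 0" "cf p 1 0 = 0" "1*i + 2*j < 2"
  moreover have "j = 0 \<and> (i = 0 \<or> i = 1)" using \<open>1*i + 2*j < 2\<close> by arith
  ultimately show "cf p i j = 0" by auto
qed
lemma w32_3: "cf p 0 0 = 0 \<Longrightarrow> cf p 0 1 = 0 \<Longrightarrow> wlow 3 2 3 p"
  unfolding wlow_def
proof (intro allI impI)
  fix i j :: nat assume "cf p 0 0 = 0" "cf p 0 1 = 0" "3*i + 2*j < 3"
  moreover have "i = 0 \<and> (j = 0 \<or> j = 1)" using \<open>3*i + 2*j < 3\<close> by arith
  ultimately show "cf p i j = 0" by auto
qed
lemma w13_3: "cf p 0 0 = 0 \<Longrightarrow> cf p 1 0 = 0 \<Longrightarrow> cf p 2 0 = 0 \<Longrightarrow> wlow 1 3 3 p"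
  unfolding wlow_def
proof (intro allI impI)
  fix i j :: nat assume "cf p 0 0 = 0" "cf p 1 0 = 0" "cf p 2 0 = 0" "1*i + 3*j < 3"
  moreover have "j = 0 \<and> (i = 0 \<or> i = 1 \<or> i = 2)" using \<open>1*i + 3*j < 3\<close> by arith
  ultimately show "cf p i j = 0" by auto
qed
lemma w11_2: "cf p 0 0 = 0 \<Longrightarrow> cf p 1 0 = 0 \<Longrightarrow> cf p 0 1 = 0 \<Longrightarrow> wlow 1 1 2 p"
  unfolding wlow_def
proof (intro allI impI)
  fix i j :: nat assume "cf p 0 0 = 0" "cf p 1 0 = 0" "cf p 0 1 = 0" "1*i + 1*j < 2"
  moreover have "(i = 0 \<and> j = 0) \<or> (i = 1 \<and> j = 0) \<or> (i = 0 \<and> j = 1)" using \<open>1*i + 1*j < 2\<close> by arith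
  ultimately show "cf p i j = 0" by auto
qed

lemma wpow: "wlow wx wy k p \<Longrightarrow> m*k = K \<Longrightarrow> wlow wx wy K (p^m)"
  using wlow_power by blast

lemma coeff_low_pow: "ulow k r \<Longrightarrow> m*k = K \<Longrightarrow> coeff (r^m) K = coeff r k ^ m"
  using coeff_power_low by blast

lemma coeff_low_pow1: "ulow k r \<Longrightarrow> m*k+1 = K \<Longrightarrow> coeff (r^m) K = of_nat m * coeff r k ^ (m-1) * coeff r (k+1)"
  using coeff_power_low1 by blast

lemma coeff_low_mult: "ulow k r \<Longrightarrow> ulow l s \<Longrightarrow> k + l = K \<Longrightarrow> coeff (r*s) K = coeff r k * coeff s l"
  using coeff_mult_low by blast

lemma coeff_low_mult1: "ulow k r \<Longrightarrow> ulow l s \<Longrightarrow> k + l + 1 = K \<Longrightarrow> coeff (r*s) K = coeff r k * coeff s (l+1) + coeff r (k+1) * coeff s l"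
  using coeff_mult_low1 by blast

lemma ulow_zero: "ulow k r \<Longrightarrow> K < k \<Longrightarrow> coeff r K = 0"
  by (simp add: ulow_def)

context
  fixes n :: nat
  assumes n2: "2 \<le> n"
begin

lemma comp_c:
  fixes q :: "'a::field bipoly" assumes q0: "cf q 0 0 = 0"
  shows "om n (mon 0 1 * q^(3*n)) = cf q 1 0 ^ (3*n)"
proof -
  have w: "wlow 1 1 (3*n) (q^(3*n))" by (rule wpow[OF w11_1[OF q0]]) simp
  have z1: "cf (q^(3*n)) 0 (2*n+1) = 0" by (rule wlowD[OF w]) (use n2 in simp)
  have z2: "cf (q^(3*n)) n (n+1) = 0" by (rule wlowD[OF w]) (use n2 in simp)
  have z3: "cf (q^(3*n)) (2*n) 1 = 0" by (rule wlowD[OF w]) (use n2 in simp)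
  have m: "cf (q^(3*n)) (3*n) 0 = cf q 1 0 ^ (3*n)"
  proof -
    have "cf (q^(3*n)) (3*n) 0 = coeff ((Y0 q)^(3*n)) (3*n)" by (simp add: coeff_Y0[symmetric] Y0_power)
    also have "\<dots> = coeff (Y0 q) 1 ^ (3*n)" by (rule coeff_low_pow[OF ulow_Y0_1[OF q0]]) simp
    finally show ?thesis by (simp add: coeff_Y0)
  qed
  show ?thesis using z1 z2 z3 m by (simp add: om_mon_mult)
qed

lemma comp_w11_zero:
  fixes P :: "'a::field bipoly" assumes w: "wlow 1 1 K P" and K: "3*n+2 \<le> K"
  shows "om n P = 0"
  using wlowD[OF w, of 0 "2*n+2"] wlowD[OF w, of n "n+2"] wlowD[OF w, of "2*n" 2] wlowD[OF w, of "3*n" 1] K n2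
  by (simp add: om_def)

lemma comp_b:
  fixes p q :: "'a::field bipoly"
  assumes p0: "cf p 0 0 = 0" and q0: "cf q 0 0 = 0" and q10: "cf q 1 0 = 0"
  shows "om n (p * q^(2*n+1)) = cf p 0 1 * cf q 0 1 ^ (2*n+1)"
proof -
  have w: "wlow 1 2 (1 + (2*n+1)*2) (p * q^(2*n+1))"
    by (rule wlow_mult[OF w12_1[OF p0] wpow[OF w12_2[OF q0 q10]]]) simp
  have z1: "cf (p * q^(2*n+1)) n (n+2) = 0" by (rule wlowD[OF w]) (use n2 in simp)
  have z2: "cf (p * q^(2*n+1)) (2*n) 2 = 0" by (rule wlowD[OF w]) (use n2 in simp)
  have z3: "cf (p * q^(2*n+1)) (3*n) 1 = 0" by (rule wlowD[OF w]) (use n2 in simp)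
  have m: "cf (p * q^(2*n+1)) 0 (2*n+2) = cf p 0 1 * cf q 0 1 ^ (2*n+1)"
  proof -
    have u: "ulow (2*n+1) (coeff q 0 ^ (2*n+1))" using ulow_power[OF ulow_c0_1[OF q0], of "2*n+1"] by simp
    have "cf (p * q^(2*n+1)) 0 (2*n+2) = coeff (coeff p 0 * coeff q 0 ^ (2*n+1)) (2*n+2)"
      by (simp only: cf_def coeff_mult_0 coeff_0_power)
    also have "\<dots> = coeff (coeff p 0) 1 * coeff (coeff q 0 ^ (2*n+1)) (2*n+1)"
      by (rule coeff_low_mult[OF ulow_c0_1[OF p0] u]) simp
    also have "coeff (coeff q 0 ^ (2*n+1)) (2*n+1) = coeff (coeff q 0) 1 ^ (2*n+1)"
      by (rule coeff_low_pow[OF ulow_c0_1[OF q0]]) simp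
    finally show ?thesis by (simp add: cf_def)
  qed
  show ?thesis using z1 z2 z3 m by (simp add: om_def)
qed

lemma comp_ypsi:
  fixes q :: "'a::field bipoly"
  assumes q0: "cf q 0 0 = 0" and q10: "cf q 1 0 = 0"
  shows "om n (mon 0 1 * q^(2*n+1)) = cf q 0 1 ^ (2*n+1)"
proof -
  have w: "wlow 1 2 ((2*n+1)*2) (q^(2*n+1))"
    by (rule wpow[OF w12_2[OF q0 q10]]) simp
  have z1: "cf (q^(2*n+1)) n (n+1) = 0" by (rule wlowD[OF w]) (use n2 in simp)
  have z2: "cf (q^(2*n+1)) (2*n) 1 = 0" by (rule wlowD[OF w]) (use n2 in simp)
  have z3: "cf (q^(2*n+1)) (3*n) 0 = 0" by (rule wlowD[OF w]) (use n2 in simp)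
  have m: "cf (q^(2*n+1)) 0 (2*n+1) = cf q 0 1 ^ (2*n+1)"
  proof -
    have "cf (q^(2*n+1)) 0 (2*n+1) = coeff (coeff q 0 ^ (2*n+1)) (2*n+1)"
      by (simp only: cf_def coeff_0_power)
    also have "\<dots> = coeff (coeff q 0) 1 ^ (2*n+1)"
      by (rule coeff_low_pow[OF ulow_c0_1[OF q0]]) simp
    finally show ?thesis by (simp add: cf_def)
  qed
  show ?thesis using z1 z2 z3 m by (simp add: om_mon_mult)
qed

lemma comp_yphi:
  fixes p :: "'a::field bipoly"
  assumes p0: "cf p 0 0 = 0" and p01: "cf p 0 1 = 0"
  shows "om n (mon 0 1 * p^(3*n)) = cf p 1 0 ^ (3*n)"
proof -
  have w: "wlow 3 2 ((3*n)*3) (p^(3*n))"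
    by (rule wpow[OF w32_3[OF p0 p01]]) simp
  have z1: "cf (p^(3*n)) 0 (2*n+1) = 0" by (rule wlowD[OF w]) (use n2 in simp)
  have z2: "cf (p^(3*n)) n (n+1) = 0" by (rule wlowD[OF w]) (use n2 in simp)
  have z3: "cf (p^(3*n)) (2*n) 1 = 0" by (rule wlowD[OF w]) (use n2 in simp)
  have m: "cf (p^(3*n)) (3*n) 0 = cf p 1 0 ^ (3*n)"
  proof -
    have "cf (p^(3*n)) (3*n) 0 = coeff ((Y0 p)^(3*n)) (3*n)" by (simp add: coeff_Y0[symmetric] Y0_power)
    also have "\<dots> = coeff (Y0 p) 1 ^ (3*n)" by (rule coeff_low_pow[OF ulow_Y0_1[OF p0]]) simp
    finally show ?thesis by (simp add: coeff_Y0)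
  qed
  show ?thesis using z1 z2 z3 m by (simp add: om_mon_mult)
qed


lemma idx1: "n - (n-1) = 1" "2*n-(n-1) = n+1" "3*n-(n-1) = 2*n+1" "n+2-1 = n+1" "n-1 \<noteq> 0" "n - 1 \<le> n" "n-1 \<le> 2*n" "n-1 \<le> 3*n"
  using n2 by auto

lemma comp_E2a:
  fixes p :: "'a::field bipoly"
  assumes p0: "cf p 0 0 = 0" and p01: "cf p 0 1 = 0"
  shows "om n (mon (n-1) 1 * p^(2*n+1)) = cf p 1 0 ^ (2*n+1)"
proof -
  have w: "wlow 3 2 ((2*n+1)*3) (p^(2*n+1))" by (rule wpow[OF w32_3[OF p0 p01]]) simp
  have z1: "cf (p^(2*n+1)) 1 (n+1) = 0" by (rule wlowD[OF w]) (use n2 in simp)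
  have z2: "cf (p^(2*n+1)) (n+1) 1 = 0" by (rule wlowD[OF w]) (use n2 in simp)
  have m: "cf (p^(2*n+1)) (2*n+1) 0 = cf p 1 0 ^ (2*n+1)"
  proof -
    have "cf (p^(2*n+1)) (2*n+1) 0 = coeff ((Y0 p)^(2*n+1)) (2*n+1)" by (simp only: coeff_Y0[symmetric] Y0_power)
    also have "\<dots> = coeff (Y0 p) 1 ^ (2*n+1)" by (rule coeff_low_pow[OF ulow_Y0_1[OF p0]]) simp
    finally show ?thesis by (simp add: coeff_Y0)
  qed
  show ?thesis using z1 z2 m idx1 by (simp add: om_mon_mult)
qed

lemma comp_E2b:
  fixes p q :: "'a::field bipoly"
  assumes p0: "cf p 0 0 = 0" and p01: "cf p 0 1 = 0" and q0: "cf q 0 0 = 0" and q10: "cf q 1 0 = 0"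
  shows "om n (mon (n-1) 1 * (p * q^(n+1))) = cf p 1 0 * cf q 0 1 ^ (n+1)"
proof -
  have w: "wlow 1 2 (1 + (n+1)*2) (p * q^(n+1))"
    by (rule wlow_mult[OF w12_1[OF p0] wpow[OF w12_2[OF q0 q10]]]) simp
  have z2: "cf (p * q^(n+1)) (n+1) 1 = 0" by (rule wlowD[OF w]) (use n2 in simp)
  have z3: "cf (p * q^(n+1)) (2*n+1) 0 = 0" by (rule wlowD[OF w]) (use n2 in simp)
  have m: "cf (p * q^(n+1)) 1 (n+1) = cf p 1 0 * cf q 0 1 ^ (n+1)"
  proof -
    have c1: "coeff (p * q^(n+1)) 1 = coeff p 0 * (of_nat (n+1) * coeff q 0 ^ n * coeff q 1) + coeff p 1 * coeff q 0 ^ (n+1)"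
      by (simp only: coeff_mult_1 coeff_power_1 coeff_0_power diff_Suc_1 Suc_eq_plus1[symmetric])
    have u1: "ulow (2 + (0 + n + 0)) (coeff p 0 * (of_nat (n+1) * coeff q 0 ^ n * coeff q 1))"
      by (intro ulow_mult ulow_c0_2[OF p0 p01] ulow_0) (rule ulow_power[OF ulow_c0_1[OF q0], of n, simplified])
    have t1: "coeff (coeff p 0 * (of_nat (n+1) * coeff q 0 ^ n * coeff q 1)) (n+1) = 0"
      by (rule ulow_zero[OF u1]) simp
    have u2: "ulow (n+1) (coeff q 0 ^ (n+1))" using ulow_power[OF ulow_c0_1[OF q0], of "n+1"] by simp
    have t2: "coeff (coeff p 1 * coeff q 0 ^ (n+1)) (n+1) = coeff (coeff p 1) 0 * coeff (coeff q 0 ^ (n+1)) (n+1)"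
      by (rule coeff_low_mult[OF ulow_0 u2]) simp
    have t3: "coeff (coeff q 0 ^ (n+1)) (n+1) = coeff (coeff q 0) 1 ^ (n+1)"
      by (rule coeff_low_pow[OF ulow_c0_1[OF q0]]) simp
    show ?thesis unfolding cf_def c1 coeff_add t1 t2 t3 by simp
  qed
  show ?thesis using z2 z3 m idx1 by (simp add: om_mon_mult)
qed

lemma comp_E5a:
  fixes p :: "'a::field bipoly"
  assumes p0: "cf p 0 0 = 0" and p01: "cf p 0 1 = 0"
  shows "om n (mon (n-1) 0 * p^(2*n+1)) = of_nat (2*n+1) * cf p 1 0 ^ (2*n) * cf p 1 1"
proof -
  have w: "wlow 3 2 ((2*n+1)*3) (p^(2*n+1))" by (rule wpow[OF w32_3[OF p0 p01]]) simp
  have z1: "cf (p^(2*n+1)) 1 (n+2) = 0" by (rule wlowD[OF w]) (use n2 in simp)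
  have z2: "cf (p^(2*n+1)) (n+1) 2 = 0" by (rule wlowD[OF w]) (use n2 in simp)
  have m: "cf (p^(2*n+1)) (2*n+1) 1 = of_nat (2*n+1) * cf p 1 0 ^ (2*n) * cf p 1 1"
  proof -
    have u: "ulow (2*n) (Y0 p ^ (2*n))" using ulow_power[OF ulow_Y0_1[OF p0], of "2*n"] by simp
    have "cf (p^(2*n+1)) (2*n+1) 1 = coeff (smult (of_nat (2*n+1)) (Y0 p ^ (2*n) * Y1 p)) (2*n+1)"
      by (simp only: coeff_Y1[symmetric] Y1_power diff_add_inverse2)
    also have "\<dots> = of_nat (2*n+1) * (coeff (Y0 p ^ (2*n)) (2*n) * coeff (Y1 p) 1)"
      by (simp only: coeff_smult', subst coeff_low_mult[OF u ulow_Y1_1[OF p01]]) simp_all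
    also have "coeff (Y0 p ^ (2*n)) (2*n) = coeff (Y0 p) 1 ^ (2*n)"
      by (rule coeff_low_pow[OF ulow_Y0_1[OF p0]]) simp
    finally show ?thesis by (simp add: coeff_Y0 coeff_Y1)
  qed
  show ?thesis using z1 z2 m idx1 by (simp add: om_mon_mult)
qed

lemma comp_E5b:
  fixes p q :: "'a::field bipoly"
  assumes p0: "cf p 0 0 = 0" and p01: "cf p 0 1 = 0" and q0: "cf q 0 0 = 0" and q10: "cf q 1 0 = 0" and q20: "cf q 2 0 = 0"
  shows "om n (mon (n-1) 0 * (p * q^(n+1))) = of_nat (n+1) * cf p 1 0 * cf q 0 1 ^ n * cf q 0 2 + cf p 1 1 * cf q 0 1 ^ (n+1)"
proof -
  have w: "wlow 1 3 (1 + (n+1)*3) (p * q^(n+1))"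
    by (rule wlow_mult[OF w13_1[OF p0] wpow[OF w13_3[OF q0 q10 q20]]]) simp
  have z2: "cf (p * q^(n+1)) (n+1) 2 = 0" by (rule wlowD[OF w]) (use n2 in simp)
  have z3: "cf (p * q^(n+1)) (2*n+1) 1 = 0" by (rule wlowD[OF w]) (use n2 in simp)
  have m: "cf (p * q^(n+1)) 1 (n+2) = of_nat (n+1) * cf p 1 0 * cf q 0 1 ^ n * cf q 0 2 + cf p 1 1 * cf q 0 1 ^ (n+1)"
  proof -
    have c1: "coeff (p * q^(n+1)) 1 = coeff p 0 * (of_nat (n+1) * coeff q 0 ^ n * coeff q 1) + coeff p 1 * coeff q 0 ^ (n+1)"
      by (simp only: coeff_mult_1 coeff_power_1 coeff_0_power diff_Suc_1 Suc_eq_plus1[symmetric])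
    have u1: "ulow (2 + (0 + n + 1)) (coeff p 0 * (of_nat (n+1) * coeff q 0 ^ n * coeff q 1))"
      by (intro ulow_mult ulow_c0_2[OF p0 p01] ulow_0 ulow_c1_1[OF q10]) (rule ulow_power[OF ulow_c0_1[OF q0], of n, simplified])
    have t1: "coeff (coeff p 0 * (of_nat (n+1) * coeff q 0 ^ n * coeff q 1)) (n+2) = 0"
      by (rule ulow_zero[OF u1]) simp
    have u2: "ulow (n+1) (coeff q 0 ^ (n+1))" using ulow_power[OF ulow_c0_1[OF q0], of "n+1"] by simp
    have t2: "coeff (coeff p 1 * coeff q 0 ^ (n+1)) (n+2) = coeff (coeff p 1) 0 * coeff (coeff q 0 ^ (n+1)) (n+1+1) + coeff (coeff p 1) (0+1) * coeff (coeff q 0 ^ (n+1)) (n+1)"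
      by (rule coeff_low_mult1[OF ulow_0 u2]) simp
    have t3: "coeff (coeff q 0 ^ (n+1)) (n+1) = coeff (coeff q 0) 1 ^ (n+1)"
      by (rule coeff_low_pow[OF ulow_c0_1[OF q0]]) simp
    have t4: "coeff (coeff q 0 ^ (n+1)) (n+1+1) = of_nat (n+1) * coeff (coeff q 0) 1 ^ n * coeff (coeff q 0) 2"
    proof -
      have "(n+1)*1+1 = n+1+1" by simp
      from coeff_low_pow1[OF ulow_c0_1[OF q0] this] show ?thesis by (simp only: add_diff_cancel_right' one_add_one)
    qed
    show ?thesis unfolding cf_def c1 coeff_add t1 t2 t3 t4 by (simp add: algebra_simps)
  qed
  show ?thesis using z2 z3 m idx1 by (simp add: om_mon_mult)
qed

lemma comp_A:
  fixes q :: "'a::field bipoly"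
  assumes q0: "cf q 0 0 = 0" and q10: "cf q 1 0 = 0" and q20: "cf q 2 0 = 0"
  shows "om n (q^(2*n+1)) = of_nat (2*n+1) * cf q 0 1 ^ (2*n) * cf q 0 2"
proof -
  have w: "wlow 1 3 ((2*n+1)*3) (q^(2*n+1))" by (rule wpow[OF w13_3[OF q0 q10 q20]]) simp
  have z1: "cf (q^(2*n+1)) n (n+2) = 0" by (rule wlowD[OF w]) (use n2 in simp)
  have z2: "cf (q^(2*n+1)) (2*n) 2 = 0" by (rule wlowD[OF w]) (use n2 in simp)
  have z3: "cf (q^(2*n+1)) (3*n) 1 = 0" by (rule wlowD[OF w]) (use n2 in simp)
  have m: "cf (q^(2*n+1)) 0 (2*n+2) = of_nat (2*n+1) * cf q 0 1 ^ (2*n) * cf q 0 2"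
  proof -
    have "cf (q^(2*n+1)) 0 (2*n+2) = coeff (coeff q 0 ^ (2*n+1)) (2*n+2)"
      by (simp only: cf_def coeff_0_power)
    also have "\<dots> = of_nat (2*n+1) * coeff (coeff q 0) 1 ^ (2*n) * coeff (coeff q 0) 2"
    proof -
      have "(2*n+1)*1+1 = 2*n+2" by simp
      from coeff_low_pow1[OF ulow_c0_1[OF q0] this] show ?thesis by (simp only: add_diff_cancel_right' one_add_one)
    qed
    finally show ?thesis by (simp only: cf_def)
  qed
  show ?thesis using z1 z2 z3 m by (simp add: om_def)
qed

lemma comp_B:
  fixes p :: "'a::field bipoly"
  assumes p0: "cf p 0 0 = 0" and p01: "cf p 0 1 = 0"
  shows "om n (p^(3*n)) = of_nat (3*n) * cf p 1 0 ^ (3*n-1) * cf p 1 1"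
proof -
  have w: "wlow 3 2 ((3*n)*3) (p^(3*n))" by (rule wpow[OF w32_3[OF p0 p01]]) simp
  have z1: "cf (p^(3*n)) 0 (2*n+2) = 0" by (rule wlowD[OF w]) (use n2 in simp)
  have z2: "cf (p^(3*n)) n (n+2) = 0" by (rule wlowD[OF w]) (use n2 in simp)
  have z3: "cf (p^(3*n)) (2*n) 2 = 0" by (rule wlowD[OF w]) (use n2 in simp)
  have m: "cf (p^(3*n)) (3*n) 1 = of_nat (3*n) * cf p 1 0 ^ (3*n-1) * cf p 1 1"
  proof -
    have u: "ulow (3*n-1) (Y0 p ^ (3*n-1))" using ulow_power[OF ulow_Y0_1[OF p0], of "3*n-1"] by simp
    have "cf (p^(3*n)) (3*n) 1 = coeff (smult (of_nat (3*n)) (Y0 p ^ (3*n-1) * Y1 p)) (3*n)"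
      by (simp only: coeff_Y1[symmetric] Y1_power)
    also have "\<dots> = of_nat (3*n) * (coeff (Y0 p ^ (3*n-1)) (3*n-1) * coeff (Y1 p) 1)"
      by (simp only: coeff_smult', subst coeff_low_mult[OF u ulow_Y1_1[OF p01]]) (use n2 in simp_all)
    also have "coeff (Y0 p ^ (3*n-1)) (3*n-1) = coeff (Y0 p) 1 ^ (3*n-1)"
      by (rule coeff_low_pow[OF ulow_Y0_1[OF p0]]) simp
    finally show ?thesis by (simp add: coeff_Y0 coeff_Y1)
  qed
  show ?thesis using z1 z2 z3 m by (simp add: om_def)
qed

lemma comp_E3formula:
  fixes p q :: "'a::field bipoly"
  assumes p0: "cf p 0 0 = 0" and p01: "cf p 0 1 = 0" and q0: "cf q 0 0 = 0" and q10: "cf q 1 0 = 0"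
  shows "cf (p^n * q^2 - q^(n+2)) (n+2) 1 = 2 * cf p 1 0 ^ n * cf q 2 0 * cf q 0 1"
proof -
  have Y1a: "Y1 (p^n * q^2) = Y0 p ^ n * smult (of_nat 2) (Y0 q ^ 1 * Y1 q) + smult (of_nat n) (Y0 p ^ (n-1) * Y1 p) * Y0 q ^ 2"
    by (simp only: Y1_mult Y1_power Y0_power) simp
  have Y1b: "Y1 (q^(n+2)) = smult (of_nat (n+2)) (Y0 q ^ (n+1) * Y1 q)"
    by (simp only: Y1_power) simp
  have uq2: "ulow 2 (Y0 q)" by (rule ulow_Y0_2[OF q0 q10])
  have upn: "ulow n (Y0 p ^ n)" using ulow_power[OF ulow_Y0_1[OF p0], of n] by simp
  have tA: "coeff (Y0 p ^ n * smult (of_nat 2) (Y0 q ^ 1 * Y1 q)) (n+2) = coeff (Y0 p ^ n) n * coeff (smult (of_nat 2) (Y0 q ^ 1 * Y1 q)) 2"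
  proof -
    have uq: "ulow 2 (Y0 q ^ 1)" using uq2 by simp
    have us: "ulow 2 (smult (of_nat 2) (Y0 q ^ 1 * Y1 q))" using ulow_smult[OF ulow_mult[OF uq ulow_0]] by simp
    show ?thesis by (rule coeff_low_mult[OF upn us]) simp
  qed
  have tA2: "coeff (Y0 q ^ 1 * Y1 q) 2 = coeff (Y0 q) 2 * coeff (Y1 q) 0"
    using coeff_low_mult[OF uq2 ulow_0, of 2 "Y1 q"] by simp
  have tA3: "coeff (Y0 p ^ n) n = coeff (Y0 p) 1 ^ n"
    by (rule coeff_low_pow[OF ulow_Y0_1[OF p0]]) simp
  have uB: "ulow ((n-1) + 1 + 4) (Y0 p ^ (n-1) * Y1 p * Y0 q ^ 2)"
    by (intro ulow_mult ulow_Y1_1[OF p01]) (use ulow_power[OF ulow_Y0_1[OF p0], of "n-1"] ulow_power[OF uq2, of 2] in simp_all)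
  have tB: "coeff (smult (of_nat n) (Y0 p ^ (n-1) * Y1 p) * Y0 q ^ 2) (n+2) = 0"
  proof -
    have "coeff (Y0 p ^ (n-1) * Y1 p * Y0 q ^ 2) (n+2) = 0" by (rule ulow_zero[OF uB]) (use n2 in simp)
    thus ?thesis by (simp only: coeff_smult' mult_zero_right mult_smult_left)
  qed
  have uC: "ulow ((n+1)*2 + 0) (Y0 q ^ (n+1) * Y1 q)"
    by (intro ulow_mult ulow_power[OF uq2] ulow_0)
  have tC: "coeff (Y0 q ^ (n+1) * Y1 q) (n+2) = 0" by (rule ulow_zero[OF uC]) (use n2 in simp)
  have "cf (p^n * q^2 - q^(n+2)) (n+2) 1 = coeff (Y1 (p^n * q^2)) (n+2) - coeff (Y1 (q^(n+2))) (n+2)"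
    by (simp add: coeff_Y1)
  also have "\<dots> = coeff (Y0 p) 1 ^ n * (2 * (coeff (Y0 q) 2 * coeff (Y1 q) 0))"
    unfolding Y1a Y1b coeff_add tA tB tC coeff_smult' tA2 tA3 by simp
  finally show ?thesis by (simp add: coeff_Y0 coeff_Y1 algebra_simps)
qed

end


context
  fixes n :: nat
  assumes n2: "2 \<le> n"
begin

lemma ident_y_x: "(mon 0 (2*n+1) - mon (3*n) 0 :: 'a::field bipoly) \<in> An_ideal n"
proof -
  have idx: "n-1+2 = n+1" "n - 1 + (n+2) = 2*n+1" "n-1+(2*n+1) = 3*n" "n-1+1 = n" "0 + n = n" "n - 1 + 0 = n - 1"
    using n2 by auto
  have h1: "mon 0 (n-1) * g2 n = (mon n (n+1) - mon 0 (2*n+1) :: 'a bipoly)"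
    unfolding g2_def right_diff_distrib mon_mult using idx by (simp add: mult_2)
  have h2: "mon (n-1) 0 * g3 n = (mon (3*n) 0 - mon n (n+1) :: 'a bipoly)"
  proof -
    have "mon (n-1) 0 * g3 n = (mon (n-1+(2*n+1)) (0+0) - mon (n-1+1) (0+(n+1)) :: 'a bipoly)"
      unfolding g3_def right_diff_distrib mon_mult by simp
    also have "\<dots> = mon (3*n) 0 - mon n (n+1)" by (simp only: idx) simp
    finally show ?thesis .
  qed
  have "(mon 0 (2*n+1) - mon (3*n) 0 :: 'a bipoly) = - (mon 0 (n-1) * g2 n + mon (n-1) 0 * g3 n)"
    unfolding h1 h2 by simp
  thus ?thesis by (metis I_uminus I_add I_mult I_g2 I_g3)
qed

lemma no_aut:
  fixes f :: "'a::field bipoly set \<Rightarrow> 'a bipoly set"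
  assumes fa: "max_aut (An_ideal n) f"
    and fU: "f ` Hyp n (1::'a bipoly) = Hyp n (1 + varY)"
    and ch1: "of_nat n \<noteq> (0::'a)" and ch2: "of_nat (n-1) \<noteq> (0::'a)"
  shows False
proof -
  let ?I = "An_ideal n :: 'a bipoly set"
  let ?c = "cls ?I"
  have bij: "bij_betw f (qmax ?I) (qmax ?I)" using fa by (simp add: max_aut_def)
  have hadd: "\<And>a b. a \<in> qmax ?I \<Longrightarrow> b \<in> qmax ?I \<Longrightarrow> f (qadd ?I a b) = qadd ?I (f a) (f b)"
    using fa by (simp add: max_aut_def)
  have hmul: "\<And>a b. a \<in> qmax ?I \<Longrightarrow> b \<in> qmax ?I \<Longrightarrow> f (qmul ?I a b) = qmul ?I (f a) (f b)"
    using fa by (simp add: max_aut_def)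
  have inmax: "\<And>r. cf r 0 0 = 0 \<Longrightarrow> ?c r \<in> qmax ?I" by (simp add: cls_in_qmax)
  have fmax: "\<And>a. a \<in> qmax ?I \<Longrightarrow> f a \<in> qmax ?I" using bij by (auto simp: bij_betw_def)
  have Xm: "?c varX \<in> qmax ?I" by (simp add: cls_in_qmax varX_mon cf_mon)
  have Ym: "?c varY \<in> qmax ?I" by (simp add: cls_in_qmax varY_mon cf_mon)
  obtain p where p: "f (?c varX) = ?c p" "cf p 0 0 = 0" using fmax[OF Xm] by (auto simp: qmax_iff)
  obtain q where q: "f (?c varY) = ?c q" "cf q 0 0 = 0" using fmax[OF Ym] by (auto simp: qmax_iff)
  have mon_max: "\<And>i j. (i, j) \<noteq> (0, 0) \<Longrightarrow> ?c (mon i j) \<in> qmax ?I"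
    by (auto simp: cls_in_qmax cf_mon)
  have fy: "f (?c (mon 0 j)) = ?c (q^j)" if "1 \<le> j" for j
    using that
  proof (induction j rule: dec_induct)
    case base thus ?case using q by (simp add: varY_mon)
  next
    case (step j)
    have "?c (mon 0 (Suc j)) = qmul ?I (?c (mon 0 j)) (?c varY)"
      by (simp add: qmul_cls varY_mon mon_mult)
    hence "f (?c (mon 0 (Suc j))) = qmul ?I (f (?c (mon 0 j))) (f (?c varY))"
      using hmul[OF mon_max Ym, of 0 j] step by auto
    thus ?case using step q by (simp add: qmul_cls mult.commute)
  qed
  have fx: "f (?c (mon i 0)) = ?c (p^i)" if "1 \<le> i" for i
    using that
  proof (induction i rule: dec_induct)
    case base thus ?case using p by (simp add: varX_mon)
  next
    case (step i)
    have "?c (mon (Suc i) 0) = qmul ?I (?c (mon i 0)) (?c varX)"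
      by (simp add: qmul_cls varX_mon mon_mult)
    hence "f (?c (mon (Suc i) 0)) = qmul ?I (f (?c (mon i 0))) (f (?c varX))"
      using hmul[OF mon_max Xm, of i 0] step by auto
    thus ?case using step p by (simp add: qmul_cls mult.commute)
  qed
  have fmon: "f (?c (mon i j)) = ?c (p^i * q^j)" if "(i, j) \<noteq> (0, 0)" for i j
  proof (cases "i = 0")
    case True thus ?thesis using that fy[of j] by simp
  next
    case False
    show ?thesis
    proof (cases "j = 0")
      case True thus ?thesis using False fx[of i] by simp
    next
      case j: False
      have "?c (mon i j) = qmul ?I (?c (mon i 0)) (?c (mon 0 j))" by (simp add: qmul_cls mon_mult)
      hence "f (?c (mon i j)) = qmul ?I (f (?c (mon i 0))) (f (?c (mon 0 j)))"
        using hmul[OF mon_max mon_max, of i 0 0 j] False j by auto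
      thus ?thesis using fx[of i] fy[of j] False j by (simp add: qmul_cls)
    qed
  qed
  have z0: "qzero ?I \<in> qmax ?I" by (simp add: qzero_def cls_in_qmax)
  have fzero: "f (qzero ?I) = qzero ?I"
  proof -
    obtain r where r: "f (qzero ?I) = ?c r" using fmax[OF z0] by (auto simp: qmax_iff)
    have "qadd ?I (qzero ?I) (qzero ?I) = qzero ?I" by (simp add: qzero_def qadd_cls)
    hence "f (qzero ?I) = qadd ?I (f (qzero ?I)) (f (qzero ?I))" using hadd[OF z0 z0] by simp
    hence "?c r = ?c (r + r)" using r by (simp add: qadd_cls)
    hence "- r \<in> ?I" by (simp add: cls_eq_iff)
    hence "r \<in> ?I" using I_uminus[of "-r" n] by simp
    thus ?thesis using r by (simp add: qzero_def cls_eq_iff)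
  qed
  have zI: "p^i * q^j \<in> ?I" if "(i, j) \<noteq> (0, 0)" "mon i j \<in> ?I" for i j
  proof -
    have "?c (mon i j) = qzero ?I" using that by (simp add: qzero_def cls_eq_iff)
    hence "?c (p^i * q^j) = qzero ?I" using fmon[OF that(1)] fzero by simp
    thus ?thesis by (simp add: qzero_def cls_eq_iff)
  qed
  have eqI: "p^i * q^j - p^k * q^l \<in> ?I" if "(i, j) \<noteq> (0, 0)" "(k, l) \<noteq> (0, 0)" "mon i j - mon k l \<in> ?I" for i j k l
  proof -
    have "?c (mon i j) = ?c (mon k l)" using that by (simp add: cls_eq_iff)
    hence "?c (p^i * q^j) = ?c (p^k * q^l)" using fmon[OF that(1)] fmon[OF that(2)] by simp
    thus ?thesis by (simp add: cls_eq_iff)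
  qed
  have c0: "cf q 1 0 = 0"
  proof -
    have "?c varY \<in> f ` qmax ?I" using bij Ym by (simp add: bij_betw_def)
    then obtain w where w: "w \<in> qmax ?I" "f w = ?c varY" by blast
    then obtain r where r: "w = ?c r" "cf r 0 0 = 0" by (auto simp: qmax_iff)
    have ym: "mon 0 (3*n) * r \<in> ?I"
    proof (rule T_lemma[OF n2])
      fix k l
      have e: "mon k l * (mon 0 (3*n) * r) = mon k (l + 3*n) * r" by (simp add: mult.assoc[symmetric] mon_mult)
      have h: "l + 3*n \<le> 2*n+2 \<Longrightarrow> 2*n+2-(l+3*n) = 0" using n2 by simp
      show "om n (mon k l * (mon 0 (3*n) * r)) = 0" unfolding e using r(2) n2 h by (simp add: om_mon_mult)
    qed
    have "qmul ?I (?c (mon 0 (3*n))) w = qzero ?I" using r ym by (simp add: qmul_cls qzero_def cls_eq_iff)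
    hence "f (qmul ?I (?c (mon 0 (3*n))) w) = qzero ?I" using fzero by simp
    hence "qmul ?I (f (?c (mon 0 (3*n)))) (f w) = qzero ?I" using hmul[OF mon_max w(1), of 0 "3*n"] n2 by simp
    hence "?c (q^(3*n) * varY) = qzero ?I" using fy[of "3*n"] w n2 by (simp add: qmul_cls)
    hence "q^(3*n) * varY \<in> ?I" by (simp add: qzero_def cls_eq_iff)
    hence "om n (mon 0 1 * q^(3*n)) = 0" using om_I[OF n2] by (simp add: varY_mon mult.commute)
    hence "cf q 1 0 ^ (3*n) = 0" using comp_c[OF n2 q(2)] by simp
    thus ?thesis by simp
  qed
  have d0: "cf q 0 1 \<noteq> 0"
  proof
    assume d: "cf q 0 1 = 0"
    have w: "wlow 1 1 2 q" by (rule w11_2[OF q(2) c0 d])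
    have "q^(2*n+2) \<in> ?I"
    proof (rule T_lemma[OF n2])
      fix k l
      have wq: "wlow 1 1 ((2*n+2)*2) (q^(2*n+2))" by (rule wpow[OF w]) simp
      have "wlow 1 1 ((1*k + 1*l) + (2*n+2)*2) (mon k l * q^(2*n+2))"
        by (rule wlow_mult[OF wlow_mon wq])
      thus "om n (mon k l * q^(2*n+2)) = 0" by (rule comp_w11_zero[OF n2]) simp
    qed
    hence "f (?c (sc n)) = qzero ?I" using fmon[of 0 "2*n+2"] by (simp add: sc_def qzero_def cls_eq_iff)
    hence "f (?c (sc n)) = f (qzero ?I)" using fzero by simp
    moreover have "?c (sc n) \<in> qmax ?I" by (simp add: cls_in_qmax cf00_sc[OF n2])
    ultimately have "?c (sc n) = qzero ?I" using bij z0 by (auto simp: bij_betw_def inj_on_def)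
    hence "sc n \<in> ?I" by (simp add: qzero_def cls_eq_iff)
    hence "om n (sc n :: 'a bipoly) = 0" by (rule om_I[OF n2])
    moreover have "om n (sc n :: 'a bipoly) = 1" by (rule om_sc[OF n2])
    ultimately show False by simp
  qed
  have b0: "cf p 0 1 = 0"
  proof -
    have "mon 1 (2*n+1) \<in> ?I" by (rule mon_x_y[OF n2]) (use n2 in simp_all)
    hence "p^1 * q^(2*n+1) \<in> ?I" by (intro zI) simp_all
    hence "om n (p * q^(2*n+1)) = 0" using om_I[OF n2] by simp
    hence "cf p 0 1 * cf q 0 1 ^ (2*n+1) = 0" using comp_b[OF n2 p(2) q(2) c0] by simp
    thus ?thesis using d0 by simp
  qed
  define a where "a = cf p 1 0"
  define d where "d = cf q 0 1"
  define e where "e = cf p 1 1"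
  define c02 where "c02 = cf q 0 2"
  have Rid: "q^(2*n+1) - p^(3*n) \<in> ?I"
    using eqI[of 0 "2*n+1" "3*n" 0] ident_y_x n2 by simp
  have E1: "a^(3*n) = d^(2*n+1)"
  proof -
    have "om n (mon 0 1 * (q^(2*n+1) - p^(3*n))) = 0" by (rule om_I_mult[OF n2 Rid])
    thus ?thesis using comp_ypsi[OF n2 q(2) c0] comp_yphi[OF n2 p(2) b0]
      by (simp add: right_diff_distrib om_diff a_def d_def)
  qed
  have dnz: "d \<noteq> 0" using d0 by (simp add: d_def)
  have anz: "a \<noteq> 0"
  proof
    assume "a = 0"
    hence "a^(3*n) = 0" using n2 by simp
    thus False using E1 dnz by simp
  qed
  have R3: "p^(2*n+1) - p * q^(n+1) \<in> ?I"
    using eqI[of "2*n+1" 0 1 "n+1"] I_g3[of n] by (simp add: g3_def)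
  have E2: "a^(2*n) = d^(n+1)"
  proof -
    have "om n (mon (n-1) 1 * (p^(2*n+1) - p * q^(n+1))) = 0" by (rule om_I_mult[OF n2 R3])
    hence "a^(2*n+1) = a * d^(n+1)" using comp_E2a[OF n2 p(2) b0] comp_E2b[OF n2 p(2) b0 q(2) c0]
      by (simp add: right_diff_distrib om_diff a_def d_def)
    hence "a * a^(2*n) = a * d^(n+1)" by simp
    thus ?thesis using anz by simp
  qed
  have R2: "p^n * q^2 - q^(n+2) \<in> ?I"
    using eqI[of n 2 0 "n+2"] I_g2[of n] n2 by (simp add: g2_def)
  have c20: "cf q 2 0 = 0"
  proof -
    let ?R = "p^n * q^2 - q^(n+2)"
    have key: "cf ?R (n+2) 1 = 0"
    proof (cases "n = 2")
      case True
      have t1: "om n (mon 2 0 * ?R) = 0" by (rule om_I_mult[OF n2 R2])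
      have t2: "om n (mon 0 2 * ?R) = 0" by (rule om_I_mult[OF n2 R2])
      have uq: "ulow 2 (Y0 q)" by (rule ulow_Y0_2[OF q(2) c0])
      have z1: "cf (p^n * q^2) 4 0 = 0"
      proof -
        have u: "ulow (n*1 + 2*2) (Y0 p ^ n * Y0 q ^ 2)"
          by (intro ulow_mult ulow_power uq ulow_Y0_1[OF p(2)])
        have "coeff (Y0 p ^ n * Y0 q ^ 2) 4 = 0" by (rule ulow_zero[OF u]) (use True in simp)
        thus ?thesis by (simp only: coeff_Y0[symmetric] Y0_mult Y0_power)
      qed
      have z2: "cf (q^(n+2)) 4 0 = 0"
      proof -
        have u: "ulow ((n+2)*2) (Y0 q ^ (n+2))" by (intro ulow_power uq)
        have "coeff (Y0 q ^ (n+2)) 4 = 0" by (rule ulow_zero[OF u]) (use True in simp)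
        thus ?thesis by (simp only: coeff_Y0[symmetric] Y0_power)
      qed
      have t1': "cf ?R 0 4 + cf ?R 2 2 + cf ?R 4 1 = 0" using t1 True by (simp add: om_mon_mult del: cf_diff)
      have t2': "cf ?R 0 4 + cf ?R 2 2 + cf ?R 4 0 = 0" using t2 True by (simp add: om_mon_mult del: cf_diff)
      have "cf ?R 4 1 = cf ?R 4 0" using t1' t2' by (metis add_left_cancel)
      also have "\<dots> = 0" using z1 z2 by simp
      finally show ?thesis using True by simp
    next
      case False
      hence n3: "3 \<le> n" using n2 by simp
      have t: "om n (mon (2*n-2) 0 * ?R) = 0" by (rule om_I_mult[OF n2 R2])
      have w: "wlow 1 1 (n+2) ?R"
      proof (rule wlow_diff)
        show "wlow 1 1 (n+2) (p^n * q^2)"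
          using wlow_mult[OF wpow[OF w11_1[OF p(2)], of n n] wpow[OF w11_1[OF q(2)], of 2 2]] by simp
        show "wlow 1 1 (n+2) (q^(n+2))" by (rule wpow[OF w11_1[OF q(2)]]) simp
      qed
      have z: "cf ?R 2 2 = 0" by (rule wlowD[OF w]) (use n3 in simp)
      have idx: "2*n-2 \<noteq> 0" "\<not> 2*n-2 \<le> n" "2*n-2 \<le> 2*n" "2*n-(2*n-2) = 2" "2*n-2 \<le> 3*n" "3*n-(2*n-2) = n+2"
        using n3 by auto
      show ?thesis using t z idx by (simp add: om_mon_mult)
    qed
    hence "2 * a^n * cf q 2 0 * d = 0" using comp_E3formula[OF n2 p(2) b0 q(2) c0] by (simp add: a_def d_def)
    moreover have "(2::'a) \<noteq> 0" by (rule two_ne0[OF ch1 ch2])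
    ultimately show ?thesis using anz dnz by simp
  qed
  have E5: "of_nat (2*n+1) * a^(2*n) * e = of_nat (n+1) * a * d^n * c02 + e * d^(n+1)"
  proof -
    have "om n (mon (n-1) 0 * (p^(2*n+1) - p * q^(n+1))) = 0" by (rule om_I_mult[OF n2 R3])
    thus ?thesis using comp_E5a[OF n2 p(2) b0] comp_E5b[OF n2 p(2) b0 q(2) c0 c20]
      by (simp add: right_diff_distrib om_diff a_def d_def e_def c02_def)
  qed
  have AB: "of_nat (2*n+1) * d^(2*n) * c02 = of_nat (3*n) * a^(3*n-1) * e"
  proof -
    have "om n (q^(2*n+1) - p^(3*n)) = 0" by (rule om_I[OF n2 Rid])
    thus ?thesis using comp_A[OF n2 q(2) c0 c20] comp_B[OF n2 p(2) b0]
      by (simp add: om_diff a_def d_def e_def c02_def)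
  qed
  have c02z: "c02 = 0" by (rule final_alg[OF n2 dnz anz E2 E1 E5 AB ch1 ch2])
  have inU: "?c (mon 0 (2*n+1)) \<in> Hyp n 1"
    using n2 by (simp add: Hyp_mem cf_mon om_def)
  hence "f (?c (mon 0 (2*n+1))) \<in> Hyp n (1 + varY)" using fU by blast
  hence "?c (q^(2*n+1)) \<in> Hyp n (1 + varY)" using fmon[of 0 "2*n+1"] by simp
  hence "om n ((1 + varY) * q^(2*n+1)) = 0" by (simp add: Hyp_mem[OF n2])
  hence "om n (q^(2*n+1)) + om n (mon 0 1 * q^(2*n+1)) = 0" by (simp add: distrib_right om_add varY_mon)
  hence "d^(2*n+1) = 0" using comp_A[OF n2 q(2) c0 c20] comp_ypsi[OF n2 q(2) c0] c02z
    by (simp add: d_def c02_def)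
  thus False using dnz by simp
qed

end

theorem corollary1p3:
  fixes n :: nat
  assumes "n \<ge> 2"
    and "CHAR('a::field) = 0 \<or> (coprime CHAR('a) n \<and> coprime CHAR('a) (n - 1))"
  shows "\<not> prop_AH (An_ideal n :: 'a bipoly set)"
proof
  assume AH: "prop_AH (An_ideal n :: 'a bipoly set)"
  have "\<exists>f. max_aut (An_ideal n :: 'a bipoly set) f \<and> f ` Hyp n (1::'a bipoly) = Hyp n (1 + varY)"
    using AH U0_compl[OF assms(1)] V_compl[OF assms(1)] unfolding prop_AH_def by blast
  then obtain f where "max_aut (An_ideal n :: 'a bipoly set) f" "f ` Hyp n (1::'a bipoly) = Hyp n (1 + varY)"
    by blast
  from no_aut[OF assms(1) this char_facts[OF assms]] show False .
qed


end
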